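(* Let $d\ge0$. The integral Schur algebra $S_{\mathbb{Z}}(2,d)$, viewed inside $S_{\mathbb{Q}}(2,d)$, coincides with the subring of $S_{\mathbb{Q}}(2,d)$ generated by all divided powers $e^{(m)}=e^m/m!$ and $f^{(m)}=f^m/m!$ ($m\ge 0$). Moreover, $S_{\mathbb{Z}}(2,d)$ has a $\mathbb{Z}$-basis consisting of all $$f^{(a)}\binom{H_2}{b}e^{(c)}\qquad (a,b,c\ge 0,\ a+b+c\le d),$$ and another $\mathbb{Z}$-basis consisting of all $$e^{(a)}\binom{H_1}{b}f^{(c)}\qquad (a,b,c\ge 0,\ a+b+c\le d).$$
   Context: Let $E=\mathbb{Q}^2$ with standard basis $e_1,e_2$ and let $E_{\mathbb{Z}}=\mathbb{Z}e_1\oplus\mathbb{Z}e_2$. Let $\rho_d:U(\mathfrak{gl}_2)\to\mathrm{End}_{\mathbb{Q}}(E^{\otimes d})$ be the representation of the universal enveloping algebra of $\mathfrak{gl}_2(\mathbb{Q})$ in which $x\in\mathfrak{gl}_2$ acts as $\sum_{i=1}^d 1\otimes\cdots\otimes x\otimes\cdots\otimes 1$ ($x$ in the $i$-th slot); its image is the rational Schur algebra $S_{\mathbb{Q}}(2,d)$ (equal to the image of the group algebra of $GL_2(\mathbb{Q})$ acting diagonally, and to $\mathrm{End}_{\mathbb{Q}\Sigma_d}(E^{\otimes d})$, $\Sigma_d$ acting by place permutations). The integral Schur algebra is $S_{\mathbb{Z}}(2,d)=\mathrm{End}_{\mathbb{Z}\Sigma_d}(E_{\mathbb{Z}}^{\otimes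 d})$, regarded as a subring of $S_{\mathbb{Q}}(2,d)$ by extension of scalars. Write $e,f,H_1,H_2$ for the images under $\rho_d$ of the matrix units $e_{12},e_{21},e_{11},e_{22}$ respectively. For an element $T$ of a $\mathbb{Q}$-algebra and an integer $m\ge0$, $T^{(m)}=T^m/m!$ and $\binom{T}{m}=T(T-1)\cdots(T-m+1)/m!$. *)

theory Defs
  imports Complex_Main "HOL-Combinatorics.Permutations"
begin

text \<open>Basis of E^{tensor d}: words i = (i_0,...,i_{d-1}) with i_k in {1,2}, standing for
  e_{i_0} tensor ... tensor e_{i_{d-1}}.  Endomorphisms of E^{tensor d} over Q are represented
  by their matrices w.r.t. this basis: functions M :: nat list => nat list => rat,
  M i j = coefficient of basis vector i in M(basis vector j), zero outside Idx d.\<close>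

definition Idx :: "nat \<Rightarrow> nat list set" where
  "Idx d = {xs. length xs = d \<and> set xs \<subseteq> {1,2}}"

type_synonym mat = "nat list \<Rightarrow> nat list \<Rightarrow> rat"

definition is_mat :: "nat \<Rightarrow> mat \<Rightarrow> bool" where
  "is_mat d M \<longleftrightarrow> (\<forall>i j. i \<notin> Idx d \<or> j \<notin> Idx d \<longrightarrow> M i j = 0)"

definition mmul :: "nat \<Rightarrow> mat \<Rightarrow> mat \<Rightarrow> mat" where
  "mmul d M N = (\<lambda>i k. \<Sum>j\<in>Idx d. M i j * N j k)"

definition mone :: "nat \<Rightarrow> mat" where
  "mone d = (\<lambda>i j. if i \<in> Idx d \<and> i = j then 1 else 0)"

definition madd :: "mat \<Rightarrow> mat \<Rightarrow> mat" where
  "madd M N = (\<lambda>i j. M i j + N i j)"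

definition mneg :: "mat \<Rightarrow> mat" where
  "mneg M = (\<lambda>i j. - M i j)"

definition msmult :: "rat \<Rightarrow> mat \<Rightarrow> mat" where
  "msmult c M = (\<lambda>i j. c * M i j)"

primrec mpow :: "nat \<Rightarrow> mat \<Rightarrow> nat \<Rightarrow> mat" where
  "mpow d M 0 = mone d"
| "mpow d M (Suc n) = mmul d M (mpow d M n)"

definition divpow :: "nat \<Rightarrow> mat \<Rightarrow> nat \<Rightarrow> mat" where
  "divpow d T m = msmult (1 / of_nat (fact m)) (mpow d T m)"

primrec mfall :: "nat \<Rightarrow> mat \<Rightarrow> nat \<Rightarrow> mat" where
  "mfall d T 0 = mone d"
| "mfall d T (Suc m) = mmul d (mfall d T m) (madd T (mneg (msmult (of_nat m) (mone d))))"

definition mbinom :: "nat \<Rightarrow> mat \<Rightarrow> nat \<Rightarrow> mat" where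
  "mbinom d T m = msmult (1 / of_nat (fact m)) (mfall d T m)"

text \<open>rho_d(x) for x in gl_2(Q), given by its entries x a b (a, b in {1,2}):
  x acts on the k-th tensor slot, summed over k.\<close>
definition rho :: "nat \<Rightarrow> (nat \<Rightarrow> nat \<Rightarrow> rat) \<Rightarrow> mat" where
  "rho d x = (\<lambda>i j. if i \<in> Idx d \<and> j \<in> Idx d then
      (\<Sum>k<d. if (\<forall>l<d. l \<noteq> k \<longrightarrow> i ! l = j ! l) then x (i ! k) (j ! k) else 0)
    else 0)"

definition matunit :: "nat \<Rightarrow> nat \<Rightarrow> (nat \<Rightarrow> nat \<Rightarrow> rat)" where
  "matunit a b = (\<lambda>p q. if p = a \<and> q = b then 1 else 0)"

definition Eop :: "nat \<Rightarrow> mat" where "Eop d = rho d (matunit 1 2)"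
definition Fop :: "nat \<Rightarrow> mat" where "Fop d = rho d (matunit 2 1)"
definition H1op :: "nat \<Rightarrow> mat" where "H1op d = rho d (matunit 1 1)"
definition H2op :: "nat \<Rightarrow> mat" where "H2op d = rho d (matunit 2 2)"

definition placeperm :: "nat \<Rightarrow> (nat \<Rightarrow> nat) \<Rightarrow> mat" where
  "placeperm d \<sigma> = (\<lambda>i j. if i \<in> Idx d \<and> j \<in> Idx d \<and> i = map (\<lambda>k. j ! \<sigma> k) [0..<d]
                          then 1 else 0)"

text \<open>Integral Schur algebra S_Z(2,d) = End_{Z Sigma_d}(E_Z^{tensor d}) inside End_Q(E^{tensor d}):
  matrices with integer entries commuting with all place permutations.\<close>
definition SZ :: "nat \<Rightarrow> mat set" where
  "SZ d = {M. is_mat d M \<and> (\<forall>i j. M i j \<in> \<int>) \<and>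
     (\<forall>\<sigma>. \<sigma> permutes {..<d} \<longrightarrow> mmul d M (placeperm d \<sigma>) = mmul d (placeperm d \<sigma>) M)}"

inductive_set divpow_ring :: "nat \<Rightarrow> mat set" for d where
  gen_e: "divpow d (Eop d) m \<in> divpow_ring d"
| gen_f: "divpow d (Fop d) m \<in> divpow_ring d"
| one: "mone d \<in> divpow_ring d"
| zero: "(\<lambda>i j. 0) \<in> divpow_ring d"
| add: "M \<in> divpow_ring d \<Longrightarrow> N \<in> divpow_ring d \<Longrightarrow> madd M N \<in> divpow_ring d"
| neg: "M \<in> divpow_ring d \<Longrightarrow> mneg M \<in> divpow_ring d"
| mul: "M \<in> divpow_ring d \<Longrightarrow> N \<in> divpow_ring d \<Longrightarrow> mmul d M N \<in> divpow_ring d"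

definition is_Z_basis :: "mat set \<Rightarrow> 'a set \<Rightarrow> ('a \<Rightarrow> mat) \<Rightarrow> bool" where
  "is_Z_basis S T B \<longleftrightarrow> (\<forall>t\<in>T. B t \<in> S) \<and>
     (\<forall>M\<in>S. \<exists>!c::'a \<Rightarrow> int. (\<forall>t. t \<notin> T \<longrightarrow> c t = 0) \<and>
        M = (\<lambda>i j. \<Sum>t\<in>T. of_int (c t) * B t i j))"

definition triples :: "nat \<Rightarrow> (nat \<times> nat \<times> nat) set" where
  "triples d = {(a,b,c). a + b + c \<le> d}"

end

theory Submission
  imports Defs "HOL-Computational_Algebra.Formal_Power_Series"
begin

definition wd :: "nat \<Rightarrow> nat set \<Rightarrow> nat list" where
  "wd d S = map (\<lambda>k. if k \<in> S then 2 else 1) [0..<d]"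

definition st :: "nat list \<Rightarrow> nat set" where
  "st w = {k. k < length w \<and> w ! k = 2}"

lemma wd_length[simp]: "length (wd d S) = d"
  by (simp add: wd_def)

lemma wd_nth[simp]: "k < d \<Longrightarrow> wd d S ! k = (if k \<in> S then 2 else 1)"
  by (simp add: wd_def)

lemma wd_Idx[simp]: "wd d S \<in> Idx d"
  by (auto simp: Idx_def wd_def)

lemma st_wd[simp]: "S \<subseteq> {..<d} \<Longrightarrow> st (wd d S) = S"
  by (auto simp: st_def split: if_splits)

lemma st_sub: "st w \<subseteq> {..<length w}"
  by (auto simp: st_def)

lemma wd_st: assumes "w \<in> Idx d" shows "wd d (st w) = w"
proof (rule nth_equalityI)
  show "length (wd d (st w)) = length w" using assms by (simp add: Idx_def)
  fix k assume "k < length (wd d (st w))"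
  hence k: "k < d" by simp
  have "w ! k \<in> set w" using assms k by (simp add: Idx_def)
  hence "w ! k \<in> {1,2}" using assms by (auto simp: Idx_def)
  hence "w ! k = 1 \<or> w ! k = 2" by auto
  thus "wd d (st w) ! k = w ! k"
  proof
    assume "w ! k = 1" thus ?thesis using k assms by (simp add: st_def Idx_def)
  next
    assume "w ! k = 2" thus ?thesis using k assms by (simp add: st_def Idx_def)
  qed
qed

lemma Idx_st_sub: "w \<in> Idx d \<Longrightarrow> st w \<subseteq> {..<d}"
  using st_sub[of w] by (simp add: Idx_def)

lemma wd_inj: "I \<subseteq> {..<d} \<Longrightarrow> J \<subseteq> {..<d} \<Longrightarrow> wd d I = wd d J \<longleftrightarrow> I = J"
  by (metis st_wd)

lemma bij_wd: "bij_betw (wd d) (Pow {..<d}) (Idx d)"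
proof (rule bij_betw_byWitness[where f' = st])
  show "\<forall>a\<in>Pow {..<d}. st (wd d a) = a" by auto
  show "\<forall>a'\<in>Idx d. wd d (st a') = a'" using wd_st by blast
  show "wd d ` Pow {..<d} \<subseteq> Idx d" by auto
  show "st ` Idx d \<subseteq> Pow {..<d}" using Idx_st_sub by blast
qed

lemma sum_Idx: "(\<Sum>j\<in>Idx d. F j) = (\<Sum>J\<in>Pow {..<d}. F (wd d J))"
  using sum.reindex_bij_betw[OF bij_wd, of F] by simp

lemma Idx_cases: assumes "w \<in> Idx d" obtains S where "S \<subseteq> {..<d}" "w = wd d S"
  using assms wd_st Idx_st_sub by metis

lemma mat_eqI:
  assumes "is_mat d M" "is_mat d N"
    and "\<And>I J. I \<subseteq> {..<d} \<Longrightarrow> J \<subseteq> {..<d} \<Longrightarrow> M (wd d I) (wd d J) = N (wd d I) (wd d J)"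
  shows "M = N"
proof (intro ext)
  fix i j
  show "M i j = N i j"
  proof (cases "i \<in> Idx d \<and> j \<in> Idx d")
    case True
    then obtain I J where "I \<subseteq> {..<d}" "J \<subseteq> {..<d}" "i = wd d I" "j = wd d J"
      by (metis Idx_cases)
    thus ?thesis using assms(3) by simp
  next
    case False
    thus ?thesis using assms(1,2) by (auto simp: is_mat_def)
  qed
qed

lemma mmul_wd: "mmul d M N i k = (\<Sum>J\<in>Pow {..<d}. M i (wd d J) * N (wd d J) k)"
  by (simp add: mmul_def sum_Idx)

lemma is_mat_mmul[simp]: "is_mat d M \<Longrightarrow> is_mat d N \<Longrightarrow> is_mat d (mmul d M N)"
  by (auto simp: is_mat_def mmul_def)
lemma is_mat_mone[simp]: "is_mat d (mone d)"
  by (auto simp: is_mat_def mone_def)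
lemma is_mat_madd[simp]: "is_mat d M \<Longrightarrow> is_mat d N \<Longrightarrow> is_mat d (madd M N)"
  by (auto simp: is_mat_def madd_def)
lemma is_mat_mneg[simp]: "is_mat d M \<Longrightarrow> is_mat d (mneg M)"
  by (auto simp: is_mat_def mneg_def)
lemma is_mat_msmult[simp]: "is_mat d M \<Longrightarrow> is_mat d (msmult c M)"
  by (auto simp: is_mat_def msmult_def)
lemma is_mat_rho[simp]: "is_mat d (rho d x)"
  by (auto simp: is_mat_def rho_def)
lemma is_mat_mpow[simp]: "is_mat d M \<Longrightarrow> is_mat d (mpow d M n)"
  by (induct n) auto
lemma is_mat_divpow[simp]: "is_mat d M \<Longrightarrow> is_mat d (divpow d M n)"
  by (simp add: divpow_def)
lemma is_mat_mfall[simp]: "is_mat d M \<Longrightarrow> is_mat d (mfall d M n)"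
  by (induct n) auto
lemma is_mat_mbinom[simp]: "is_mat d M \<Longrightarrow> is_mat d (mbinom d M n)"
  by (simp add: mbinom_def)
lemma is_mat_zero[simp]: "is_mat d (\<lambda>i j. 0)"
  by (simp add: is_mat_def)

lemma mmul_assoc: "mmul d (mmul d A B) C = mmul d A (mmul d B C)"
  unfolding mmul_def
  by (auto simp: sum_distrib_left sum_distrib_right mult.assoc intro!: ext sum.swap[THEN trans])

definition Dg :: "nat \<Rightarrow> (nat \<Rightarrow> rat) \<Rightarrow> mat" where
  "Dg d h = (\<lambda>i j. if i \<in> Idx d \<and> i = j then h (card (st i)) else 0)"

lemma is_mat_Dg[simp]: "is_mat d (Dg d h)"
  by (auto simp: is_mat_def Dg_def)

lemma Dg_wd: "I \<subseteq> {..<d} \<Longrightarrow> J \<subseteq> {..<d} \<Longrightarrow>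
  Dg d h (wd d I) (wd d J) = (if I = J then h (card I) else 0)"
  by (auto simp: Dg_def wd_inj)

lemma mmul_Dg_left: assumes "I \<subseteq> {..<d}"
  shows "mmul d (Dg d h) M (wd d I) k = h (card I) * M (wd d I) k"
proof -
  have "mmul d (Dg d h) M (wd d I) k = (\<Sum>J\<in>Pow {..<d}. (if I = J then h (card I) * M (wd d I) k else 0))"
    unfolding mmul_wd by (rule sum.cong) (auto simp: Dg_wd assms)
  also have "\<dots> = h (card I) * M (wd d I) k" using assms by simp
  finally show ?thesis .
qed

lemma mmul_Dg_Dg: "mmul d (Dg d h) (Dg d g) = Dg d (\<lambda>x. h x * g x)"
  by (rule mat_eqI[of d]) (auto simp: mmul_Dg_left Dg_wd)

lemma mone_Dg: "mone d = Dg d (\<lambda>_. 1)"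
  by (auto simp: mone_def Dg_def)

lemma madd_Dg: "madd (Dg d h) (Dg d g) = Dg d (\<lambda>x. h x + g x)"
  by (auto simp: madd_def Dg_def intro!: ext)
lemma mneg_Dg: "mneg (Dg d h) = Dg d (\<lambda>x. - h x)"
  by (auto simp: mneg_def Dg_def intro!: ext)
lemma msmult_Dg: "msmult c (Dg d h) = Dg d (\<lambda>x. c * h x)"
  by (auto simp: msmult_def Dg_def intro!: ext)

lemma mfall_Dg: "mfall d (Dg d h) m = Dg d (\<lambda>x. \<Prod>i<m. h x - of_nat i)"
proof (induct m)
  case 0 thus ?case by (simp add: mone_Dg)
next
  case (Suc m)
  show ?case by (simp add: Suc mone_Dg msmult_Dg mneg_Dg madd_Dg mmul_Dg_Dg)
qed

lemma mbinom_Dg: "mbinom d (Dg d h) m = Dg d (\<lambda>x. h x gchoose m)"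
  by (simp add: mbinom_def mfall_Dg msmult_Dg gbinomial_prod_rev atLeast0LessThan)


definition gg :: "nat \<Rightarrow> nat set \<Rightarrow> nat set \<Rightarrow> rat" where
  "gg c I J = (if I \<subseteq> J \<and> card (J - I) = c then 1 else 0)"

lemma sum_indicator_card: "finite A \<Longrightarrow> (\<Sum>k\<in>A. if P k then (1::'a::comm_semiring_1) else 0) = of_nat (card {k\<in>A. P k})"
  by (simp add: sum.inter_filter[symmetric])

lemma agree_iff:
  assumes "I \<subseteq> {..<d}" "J \<subseteq> {..<d}" "k < d"
  shows "(\<forall>l<d. l \<noteq> k \<longrightarrow> wd d I ! l = wd d J ! l) \<longleftrightarrow> I - {k} = J - {k}"
proof
  assume H: "\<forall>l<d. l \<noteq> k \<longrightarrow> wd d I ! l = wd d J ! l"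
  show "I - {k} = J - {k}"
  proof (intro set_eqI iffI)
    fix x assume x: "x \<in> I - {k}"
    hence "x < d" using assms by auto
    thus "x \<in> J - {k}" using H[rule_format, of x] x by (auto split: if_splits)
  next
    fix x assume x: "x \<in> J - {k}"
    hence "x < d" using assms by auto
    thus "x \<in> I - {k}" using H[rule_format, of x] x by (auto split: if_splits)
  qed
next
  assume "I - {k} = J - {k}"
  thus "\<forall>l<d. l \<noteq> k \<longrightarrow> wd d I ! l = wd d J ! l" by (auto simp: set_eq_iff)
qed

lemma rho_wd:
  assumes "I \<subseteq> {..<d}" "J \<subseteq> {..<d}"
  shows "rho d x (wd d I) (wd d J) =
    (\<Sum>k<d. if I - {k} = J - {k} then x (if k \<in> I then 2 else 1) (if k \<in> J then 2 else 1) else 0)"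
proof -
  have "rho d x (wd d I) (wd d J) = (\<Sum>k<d. if (\<forall>l<d. l \<noteq> k \<longrightarrow> wd d I ! l = wd d J ! l) then x (wd d I ! k) (wd d J ! k) else 0)"
    unfolding rho_def by simp
  also have "\<dots> = (\<Sum>k<d. if I - {k} = J - {k} then x (if k \<in> I then 2 else 1) (if k \<in> J then 2 else 1) else 0)"
  proof (rule sum.cong[OF refl])
    fix k assume "k \<in> {..<d}"
    hence k: "k < d" by simp
    show "(if (\<forall>l<d. l \<noteq> k \<longrightarrow> wd d I ! l = wd d J ! l) then x (wd d I ! k) (wd d J ! k) else 0) =
      (if I - {k} = J - {k} then x (if k \<in> I then 2 else 1) (if k \<in> J then 2 else 1) else 0)"
      by (simp only: agree_iff[OF assms k] wd_nth[OF k])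
  qed
  finally show ?thesis .
qed

lemma Eop_wd:
  assumes I: "I \<subseteq> {..<d}" and J: "J \<subseteq> {..<d}"
  shows "Eop d (wd d I) (wd d J) = gg 1 I J"
proof -
  have "Eop d (wd d I) (wd d J) = (\<Sum>k<d. if I - {k} = J - {k} \<and> k \<notin> I \<and> k \<in> J then 1 else 0)"
    unfolding Eop_def rho_wd[OF I J] by (intro sum.cong) (auto simp: matunit_def)
  also have "\<dots> = of_nat (card {k\<in>{..<d}. I - {k} = J - {k} \<and> k \<notin> I \<and> k \<in> J})"
    by (rule sum_indicator_card) simp
  also have "{k\<in>{..<d}. I - {k} = J - {k} \<and> k \<notin> I \<and> k \<in> J} = (if I \<subseteq> J \<and> card (J - I) = 1 then J - I else {})"
  proof (cases "I \<subseteq> J \<and> card (J - I) = 1")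
    case True
    then obtain k0 where k0: "J - I = {k0}" by (auto simp: card_1_singleton_iff)
    have "k0 \<in> J" "k0 \<notin> I" using k0 by auto
    hence "k0 < d" using J by auto
    have "J = insert k0 I" using True k0 by auto
    then show ?thesis using True k0 \<open>k0 < d\<close> \<open>k0 \<notin> I\<close> by auto
  next
    case False
    have "False" if "k < d" "I - {k} = J - {k}" "k \<notin> I" "k \<in> J" for k
    proof -
      have "J - I = {k}" using that by blast
      moreover have "I \<subseteq> J" using that by blast
      ultimately show False using False by simp
    qed
    thus ?thesis using False by auto
  qed
  finally show ?thesis by (auto simp: gg_def)
qed

lemma Fop_wd:
  assumes I: "I \<subseteq> {..<d}" and J: "J \<subseteq> {..<d}"
  shows "Fop d (wd d I) (wd d J) = gg 1 J I"
proof -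
  have "Fop d (wd d I) (wd d J) = (\<Sum>k<d. if J - {k} = I - {k} \<and> k \<notin> J \<and> k \<in> I then 1 else 0)"
    unfolding Fop_def rho_wd[OF I J] by (intro sum.cong) (auto simp: matunit_def)
  also have "\<dots> = Eop d (wd d J) (wd d I)"
    unfolding Eop_def rho_wd[OF J I] by (intro sum.cong) (auto simp: matunit_def)
  finally show ?thesis using Eop_wd[OF J I] by simp
qed

lemma H2op_Dg: "H2op d = Dg d (\<lambda>x. of_nat x)"
proof (rule mat_eqI[of d])
  fix I J assume I: "I \<subseteq> {..<d}" and J: "J \<subseteq> {..<d}"
  have "H2op d (wd d I) (wd d J) = (\<Sum>k<d. if I - {k} = J - {k} \<and> k \<in> I \<and> k \<in> J then 1 else 0)"
    unfolding H2op_def rho_wd[OF I J] by (intro sum.cong) (auto simp: matunit_def)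
  also have "\<dots> = of_nat (card {k\<in>{..<d}. I - {k} = J - {k} \<and> k \<in> I \<and> k \<in> J})"
    by (rule sum_indicator_card) simp
  also have "{k\<in>{..<d}. I - {k} = J - {k} \<and> k \<in> I \<and> k \<in> J} = (if I = J then I else {})"
    using I by (auto simp: set_eq_iff)
  finally show "H2op d (wd d I) (wd d J) = Dg d (\<lambda>x. of_nat x) (wd d I) (wd d J)"
    using I J by (simp add: Dg_wd)
qed (auto simp: H2op_def)

lemma H1op_Dg: "H1op d = Dg d (\<lambda>x. of_nat (d - x))"
proof (rule mat_eqI[of d])
  fix I J assume I: "I \<subseteq> {..<d}" and J: "J \<subseteq> {..<d}"
  have "H1op d (wd d I) (wd d J) = (\<Sum>k<d. if I - {k} = J - {k} \<and> k \<notin> I \<and> k \<notin> J then 1 else 0)"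
    unfolding H1op_def rho_wd[OF I J] by (intro sum.cong) (auto simp: matunit_def)
  also have "\<dots> = of_nat (card {k\<in>{..<d}. I - {k} = J - {k} \<and> k \<notin> I \<and> k \<notin> J})"
    by (rule sum_indicator_card) simp
  also have "{k\<in>{..<d}. I - {k} = J - {k} \<and> k \<notin> I \<and> k \<notin> J} = {k\<in>{..<d}. I = J \<and> k \<notin> I}"
  proof -
    have "\<And>k. (I - {k} = J - {k} \<and> k \<notin> I \<and> k \<notin> J) \<longleftrightarrow> (I = J \<and> k \<notin> I)" by auto
    thus ?thesis by simp
  qed
  also have "{k\<in>{..<d}. I = J \<and> k \<notin> I} = (if I = J then {..<d} - I else {})" by auto
  also have "card (if I = J then {..<d} - I else {}) = (if I = J then d - card I else 0)"
    using I by (cases "I = J") (auto simp: card_Diff_subset finite_subset)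
  finally show "H1op d (wd d I) (wd d J) = Dg d (\<lambda>x. of_nat (d - x)) (wd d I) (wd d J)"
    using I J by (simp add: Dg_wd)
qed (auto simp: H1op_def)

lemma count_between:
  fixes d :: nat
  assumes I: "I \<subseteq> {..<d}" and J: "J \<subseteq> {..<d}"
  shows "card {M\<in>Pow {..<d}. I \<subseteq> M \<and> card (M - I) = a \<and> M \<subseteq> J \<and> card (J - M) = c}
    = (if I \<subseteq> J \<and> card (J - I) = a + c then (a + c) choose a else 0)"
proof (cases "I \<subseteq> J \<and> card (J - I) = a + c")
  case True
  have fJ: "finite J" by (meson J finite_lessThan finite_subset)
  have eq: "{M\<in>Pow {..<d}. I \<subseteq> M \<and> card (M - I) = a \<and> M \<subseteq> J \<and> card (J - M) = c}
      = (\<lambda>T. I \<union> T) ` {T. T \<subseteq> J - I \<and> card T = a}"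
  proof (intro set_eqI iffI)
    fix M assume M: "M \<in> {M\<in>Pow {..<d}. I \<subseteq> M \<and> card (M - I) = a \<and> M \<subseteq> J \<and> card (J - M) = c}"
    hence "M = I \<union> (M - I)" "M - I \<subseteq> J - I" "card (M - I) = a" by blast+
    thus "M \<in> (\<lambda>T. I \<union> T) ` {T. T \<subseteq> J - I \<and> card T = a}" by (intro image_eqI[of _ _ "M - I"]) blast+
  next
    fix M assume "M \<in> (\<lambda>T. I \<union> T) ` {T. T \<subseteq> J - I \<and> card T = a}"
    then obtain T where T: "T \<subseteq> J - I" "card T = a" "M = I \<union> T" by auto
    have "M - I = T" using T by blast
    moreover have "J - M = (J - I) - T" using T by blast
    moreover have "card ((J - I) - T) = c" using T True fJ
      by (simp add: card_Diff_subset finite_subset)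
    moreover have "M \<subseteq> J" "I \<subseteq> M" using T True by blast+
    ultimately show "M \<in> {M\<in>Pow {..<d}. I \<subseteq> M \<and> card (M - I) = a \<and> M \<subseteq> J \<and> card (J - M) = c}"
      using T J by auto
  qed
  have inj: "inj_on (\<lambda>T. I \<union> T) {T. T \<subseteq> J - I \<and> card T = a}"
  proof (rule inj_onI)
    fix x y assume x: "x \<in> {T. T \<subseteq> J - I \<and> card T = a}" and y: "y \<in> {T. T \<subseteq> J - I \<and> card T = a}"
      and xy: "I \<union> x = I \<union> y"
    have "x = (I \<union> x) - I" using x by blast
    also have "\<dots> = (I \<union> y) - I" using xy by simp
    also have "\<dots> = y" using y by blast
    finally show "x = y" .
  qed
  have "card {M\<in>Pow {..<d}. I \<subseteq> M \<and> card (M - I) = a \<and> M \<subseteq> J \<and> card (J - M) = c}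
     = card {T. T \<subseteq> J - I \<and> card T = a}" unfolding eq by (rule card_image[OF inj])
  also have "\<dots> = card (J - I) choose a" using fJ by (simp add: n_subsets)
  finally show ?thesis using True by simp
next
  case False
  have fJ: "finite J" by (meson J finite_lessThan finite_subset)
  have "{M\<in>Pow {..<d}. I \<subseteq> M \<and> card (M - I) = a \<and> M \<subseteq> J \<and> card (J - M) = c} = {}"
  proof (rule ccontr)
    assume "\<not> ?thesis"
    then obtain M where M: "I \<subseteq> M" "card (M - I) = a" "M \<subseteq> J" "card (J - M) = c" by blast
    have "J - I = (J - M) \<union> (M - I)" "(J - M) \<inter> (M - I) = {}" using M by blast+
    moreover have "finite (J - M)" "finite (M - I)" using fJ M by (auto intro: finite_subset)
    ultimately have "card (J - I) = c + a" using M by (simp add: card_Un_disjoint)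
    moreover have "I \<subseteq> J" using M by blast
    ultimately show False using False by simp
  qed
  thus ?thesis using False by (simp only: if_False card.empty)
qed

lemma mpow_E_wd:
  assumes I: "I \<subseteq> {..<d}" and J: "J \<subseteq> {..<d}"
  shows "mpow d (Eop d) n (wd d I) (wd d J) = fact n * gg n I J"
  using I J
proof (induct n arbitrary: I J)
  case 0
  then show ?case by (auto simp: mone_def gg_def wd_inj finite_subset)
next
  case (Suc n)
  have "mpow d (Eop d) (Suc n) (wd d I) (wd d J)
     = (\<Sum>M\<in>Pow {..<d}. if I \<subseteq> M \<and> card (M - I) = 1 \<and> M \<subseteq> J \<and> card (J - M) = n then fact n else 0)"
    unfolding mpow.simps mmul_wd using Suc by (auto intro!: sum.cong simp: Eop_wd gg_def)
  also have "\<dots> = fact n * (\<Sum>M\<in>Pow {..<d}. if I \<subseteq> M \<and> card (M - I) = 1 \<and> M \<subseteq> J \<and> card (J - M) = n then 1 else 0)"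
    by (simp add: sum_distrib_left if_distrib cong: if_cong)
  also have "\<dots> = fact n * of_nat (card {M\<in>Pow {..<d}. I \<subseteq> M \<and> card (M - I) = 1 \<and> M \<subseteq> J \<and> card (J - M) = n})"
    by (subst sum_indicator_card) auto
  also have "\<dots> = fact (Suc n) * gg (Suc n) I J"
    using count_between[OF Suc.prems, of 1 n] by (simp add: gg_def)
  finally show ?case .
qed

lemma mpow_F_wd:
  assumes I: "I \<subseteq> {..<d}" and J: "J \<subseteq> {..<d}"
  shows "mpow d (Fop d) n (wd d I) (wd d J) = fact n * gg n J I"
  using I J
proof (induct n arbitrary: I J)
  case 0
  then show ?case by (auto simp: mone_def gg_def wd_inj finite_subset)
next
  case (Suc n)
  have "mpow d (Fop d) (Suc n) (wd d I) (wd d J)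
     = (\<Sum>M\<in>Pow {..<d}. if J \<subseteq> M \<and> card (M - J) = n \<and> M \<subseteq> I \<and> card (I - M) = 1 then fact n else 0)"
    unfolding mpow.simps mmul_wd using Suc by (auto intro!: sum.cong simp: Fop_wd gg_def)
  also have "\<dots> = fact n * (\<Sum>M\<in>Pow {..<d}. if J \<subseteq> M \<and> card (M - J) = n \<and> M \<subseteq> I \<and> card (I - M) = 1 then 1 else 0)"
    by (simp add: sum_distrib_left if_distrib cong: if_cong)
  also have "\<dots> = fact n * of_nat (card {M\<in>Pow {..<d}. J \<subseteq> M \<and> card (M - J) = n \<and> M \<subseteq> I \<and> card (I - M) = 1})"
    by (subst sum_indicator_card) auto
  also have "\<dots> = fact (Suc n) * gg (Suc n) J I"
    using count_between[OF Suc.prems(2,1), of n 1] by (simp add: gg_def)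
  finally show ?case .
qed

lemma divpow_E_wd:
  "I \<subseteq> {..<d} \<Longrightarrow> J \<subseteq> {..<d} \<Longrightarrow> divpow d (Eop d) n (wd d I) (wd d J) = gg n I J"
  by (simp add: divpow_def msmult_def mpow_E_wd)

lemma divpow_F_wd:
  "I \<subseteq> {..<d} \<Longrightarrow> J \<subseteq> {..<d} \<Longrightarrow> divpow d (Fop d) n (wd d I) (wd d J) = gg n J I"
  by (simp add: divpow_def msmult_def mpow_F_wd)

lemma is_mat_Eop[simp]: "is_mat d (Eop d)" by (simp add: Eop_def)
lemma is_mat_Fop[simp]: "is_mat d (Fop d)" by (simp add: Fop_def)


lemma finite_sub_lessThan: "(I::nat set) \<subseteq> {..<d} \<Longrightarrow> finite I"
  by (meson finite_lessThan finite_subset)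

lemma G_lemma:
  fixes d :: nat and h :: "nat \<Rightarrow> rat"
  assumes I: "I \<subseteq> {..<d}" and J: "J \<subseteq> {..<d}"
  shows "(\<Sum>M\<in>Pow {..<d}. gg a M I * (h (card M) * gg c M J)) =
    (if card (I - J) \<le> a \<and> card (J - I) \<le> c \<and> a - card (I - J) = c - card (J - I)
     then of_nat (card (I \<inter> J) choose (a - card (I - J))) * h (card (I \<inter> J) - (a - card (I - J)))
     else 0)"
proof -
  define K where "K = I \<inter> J"
  define q where "q = card (I - J)"
  define r where "r = card (J - I)"
  define t where "t = a - q"
  have fI: "finite I" and fJ: "finite J" using I J finite_sub_lessThan by auto
  have fK: "finite K" using fI K_def by simp
  have cI: "card (I - M) = q + card (K - M)" if "M \<subseteq> K" for M
  proof -
    have "I - M = (I - J) \<union> (K - M)" "(I - J) \<inter> (K - M) = {}" using that K_def by blast+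
    moreover have "finite (I - J)" "finite (K - M)" using fI fK by auto
    ultimately show ?thesis unfolding q_def by (simp add: card_Un_disjoint)
  qed
  have cJ: "card (J - M) = r + card (K - M)" if "M \<subseteq> K" for M
  proof -
    have "J - M = (J - I) \<union> (K - M)" "(J - I) \<inter> (K - M) = {}" using that K_def by blast+
    moreover have "finite (J - I)" "finite (K - M)" using fJ fK by auto
    ultimately show ?thesis unfolding r_def by (simp add: card_Un_disjoint)
  qed
  define S where "S = {M\<in>Pow {..<d}. M \<subseteq> I \<and> card (I - M) = a \<and> M \<subseteq> J \<and> card (J - M) = c}"
  have "(\<Sum>M\<in>Pow {..<d}. gg a M I * (h (card M) * gg c M J)) =
        (\<Sum>M\<in>Pow {..<d}. if M \<subseteq> I \<and> card (I - M) = a \<and> M \<subseteq> J \<and> card (J - M) = c then h (card M) else 0)"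
    by (rule sum.cong) (auto simp: gg_def)
  also have "\<dots> = (\<Sum>M\<in>S. h (card M))"
    unfolding S_def by (rule sum.inter_filter[symmetric]) simp
  finally have sumS: "(\<Sum>M\<in>Pow {..<d}. gg a M I * (h (card M) * gg c M J)) = (\<Sum>M\<in>S. h (card M))" .
  show ?thesis
  proof (cases "q \<le> a \<and> r \<le> c \<and> a - q = c - r")
    case True
    have Seq: "S = {M. M \<subseteq> K \<and> card (K - M) = t}"
    proof (intro set_eqI iffI)
      fix M assume "M \<in> S"
      hence M: "M \<subseteq> I" "card (I - M) = a" "M \<subseteq> J" by (auto simp: S_def)
      hence MK: "M \<subseteq> K" by (simp add: K_def)
      have "card (K - M) = t" using cI[OF MK] M(2) t_def by simp
      thus "M \<in> {M. M \<subseteq> K \<and> card (K - M) = t}" using MK by simp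
    next
      fix M assume "M \<in> {M. M \<subseteq> K \<and> card (K - M) = t}"
      hence M: "M \<subseteq> K" "card (K - M) = t" by auto
      have km: "card (K - M) = a - q" using M(2) t_def by simp
      have "card (I - M) = a" using cI[OF M(1)] km True by linarith
      moreover have "card (J - M) = c" using cJ[OF M(1)] km True by linarith
      moreover have "M \<subseteq> I" "M \<subseteq> J" using M(1) K_def by auto
      moreover have "M \<subseteq> {..<d}" using \<open>M \<subseteq> I\<close> I by blast
      ultimately show "M \<in> S" by (simp add: S_def)
    qed
    have cM: "card M = card K - t" if "M \<in> S" for M
    proof -
      have M: "M \<subseteq> K" "card (K - M) = t" using that Seq by auto
      have "card (K - M) = card K - card M" using M(1) fK by (simp add: card_Diff_subset finite_subset)
      moreover have "card M \<le> card K" using M(1) fK by (simp add: card_mono)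
      ultimately show ?thesis using M(2) by simp
    qed
    have "(\<Sum>M\<in>S. h (card M)) = (\<Sum>M\<in>S. h (card K - t))"
      by (rule sum.cong) (auto simp: cM)
    also have "\<dots> = of_nat (card S) * h (card K - t)" by simp
    also have "card S = card K choose t"
    proof -
      have "S = (\<lambda>N. K - N) ` {N. N \<subseteq> K \<and> card N = t}"
      proof (intro set_eqI iffI)
        fix M assume "M \<in> S"
        hence M: "M \<subseteq> K" "card (K - M) = t" using Seq by auto
        have "M = K - (K - M)" using M(1) by blast
        thus "M \<in> (\<lambda>N. K - N) ` {N. N \<subseteq> K \<and> card N = t}" using M(2) by blast
      next
        fix M assume "M \<in> (\<lambda>N. K - N) ` {N. N \<subseteq> K \<and> card N = t}"
        then obtain N where N: "N \<subseteq> K" "card N = t" "M = K - N" by blast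
        have "K - M = N" using N by blast
        thus "M \<in> S" using N Seq by auto
      qed
      moreover have "inj_on (\<lambda>N. K - N) {N. N \<subseteq> K \<and> card N = t}"
      proof (rule inj_onI)
        fix x y assume x: "x \<in> {N. N \<subseteq> K \<and> card N = t}" and y: "y \<in> {N. N \<subseteq> K \<and> card N = t}"
          and xy: "K - x = K - y"
        have "x = K - (K - x)" using x by blast
        also have "\<dots> = K - (K - y)" using xy by simp
        also have "\<dots> = y" using y by blast
        finally show "x = y" .
      qed
      ultimately have "card S = card {N. N \<subseteq> K \<and> card N = t}" by (simp add: card_image)
      thus ?thesis using fK by (simp add: n_subsets)
    qed
    finally show ?thesis using sumS True by (simp add: K_def q_def r_def t_def)
  next
    case False
    have "S = {}"
    proof (rule ccontr)
      assume "S \<noteq> {}"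
      then obtain M where "M \<in> S" by blast
      hence M: "M \<subseteq> I" "card (I - M) = a" "M \<subseteq> J" "card (J - M) = c" by (auto simp: S_def)
      hence MK: "M \<subseteq> K" by (simp add: K_def)
      show False using cI[OF MK] cJ[OF MK] M False by simp
    qed
    moreover have "\<not> (card (I - J) \<le> a \<and> card (J - I) \<le> c \<and> a - card (I - J) = c - card (J - I))"
      using False by (simp add: q_def r_def)
    ultimately show ?thesis using sumS by (simp only: if_False sum.empty)
  qed
qed

definition cnt :: "nat set \<Rightarrow> nat set \<Rightarrow> nat \<times> nat \<times> nat" where
  "cnt I J = (card (I \<inter> J), card (I - J), card (J - I))"

definition beta1 :: "nat \<times> nat \<times> nat \<Rightarrow> nat \<times> nat \<times> nat \<Rightarrow> int" where
  "beta1 t o' = (case t of (a,b,c) \<Rightarrow> case o' of (p,q,r) \<Rightarrow>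
     if q \<le> a \<and> r \<le> c \<and> a - q = c - r then int ((p choose (a - q)) * ((p - (a - q)) choose b)) else 0)"

definition beta2 :: "nat \<Rightarrow> nat \<times> nat \<times> nat \<Rightarrow> nat \<times> nat \<times> nat \<Rightarrow> int" where
  "beta2 d t o' = (case t of (a,b,c) \<Rightarrow> case o' of (p,q,r) \<Rightarrow>
     if r \<le> a \<and> q \<le> c \<and> a - r = c - q
     then int (((d - (p+q+r)) choose (a - r)) * ((d - (p+q+r) - (a - r)) choose b)) else 0)"

definition B1 :: "nat \<Rightarrow> nat \<times> nat \<times> nat \<Rightarrow> mat" where
  "B1 d = (\<lambda>(a,b,c). mmul d (divpow d (Fop d) a) (mmul d (mbinom d (H2op d) b) (divpow d (Eop d) c)))"

definition B2 :: "nat \<Rightarrow> nat \<times> nat \<times> nat \<Rightarrow> mat" where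
  "B2 d = (\<lambda>(a,b,c). mmul d (divpow d (Eop d) a) (mmul d (mbinom d (H1op d) b) (divpow d (Fop d) c)))"

lemma is_mat_B1[simp]: "is_mat d (B1 d t)"
  by (auto simp: B1_def H2op_def split: prod.splits)
lemma is_mat_B2[simp]: "is_mat d (B2 d t)"
  by (auto simp: B2_def H1op_def split: prod.splits)

lemma FDE_wd:
  assumes I: "I \<subseteq> {..<d}" and J: "J \<subseteq> {..<d}"
  shows "mmul d (divpow d (Fop d) a) (mmul d (Dg d h) (divpow d (Eop d) c)) (wd d I) (wd d J)
     = (\<Sum>M\<in>Pow {..<d}. gg a M I * (h (card M) * gg c M J))"
  unfolding mmul_wd[of d "divpow d (Fop d) a"]
  by (rule sum.cong[OF refl]) (use I J in \<open>auto simp: divpow_F_wd divpow_E_wd mmul_Dg_left\<close>)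

lemma EDF_wd:
  assumes I: "I \<subseteq> {..<d}" and J: "J \<subseteq> {..<d}"
  shows "mmul d (divpow d (Eop d) a) (mmul d (Dg d h) (divpow d (Fop d) c)) (wd d I) (wd d J)
     = (\<Sum>M\<in>Pow {..<d}. gg a I M * (h (card M) * gg c J M))"
  unfolding mmul_wd[of d "divpow d (Eop d) a"]
  by (rule sum.cong[OF refl]) (use I J in \<open>auto simp: divpow_F_wd divpow_E_wd mmul_Dg_left\<close>)

lemma bij_compl: "bij_betw (\<lambda>M. {..<d} - M) (Pow {..<(d::nat)}) (Pow {..<d})"
  by (rule bij_betw_byWitness[where f' = "\<lambda>M. {..<d} - M"]) auto

lemma gg_compl:
  assumes "I \<subseteq> {..<d}" "M \<subseteq> {..<(d::nat)}"
  shows "gg a I ({..<d} - M) = gg a M ({..<d} - I)"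
proof -
  have "I \<subseteq> {..<d} - M \<longleftrightarrow> M \<subseteq> {..<d} - I" using assms by blast
  moreover have "({..<d} - M) - I = ({..<d} - I) - M" by blast
  ultimately show ?thesis by (simp add: gg_def)
qed

lemma sum_compl:
  fixes d :: nat
  assumes I: "I \<subseteq> {..<d}" and J: "J \<subseteq> {..<d}"
  shows "(\<Sum>M\<in>Pow {..<d}. gg a I M * (h (card M) * gg c J M)) =
    (\<Sum>M\<in>Pow {..<d}. gg a M ({..<d} - I) * (h (d - card M) * gg c M ({..<d} - J)))"
proof -
  have "(\<Sum>M\<in>Pow {..<d}. gg a I M * (h (card M) * gg c J M)) =
     (\<Sum>M\<in>Pow {..<d}. gg a I ({..<d} - M) * (h (card ({..<d} - M)) * gg c J ({..<d} - M)))"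
    using sum.reindex_bij_betw[OF bij_compl[of d], of "\<lambda>M. gg a I M * (h (card M) * gg c J M)"] by simp
  also have "\<dots> = (\<Sum>M\<in>Pow {..<d}. gg a M ({..<d} - I) * (h (d - card M) * gg c M ({..<d} - J)))"
  proof (rule sum.cong[OF refl])
    fix M assume "M \<in> Pow {..<d}"
    hence M: "M \<subseteq> {..<d}" by simp
    have "card ({..<d} - M) = d - card M" using M by (simp add: card_Diff_subset finite_sub_lessThan)
    thus "gg a I ({..<d} - M) * (h (card ({..<d} - M)) * gg c J ({..<d} - M)) =
          gg a M ({..<d} - I) * (h (d - card M) * gg c M ({..<d} - J))"
      using gg_compl[OF I M] gg_compl[OF J M] by simp
  qed
  finally show ?thesis .
qed

lemma card_Un3:
  assumes "finite I" "finite J"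
  shows "card (I \<union> J) = card (I \<inter> J) + card (I - J) + card (J - I)"
proof -
  have "card (I \<union> (J - I)) = card I + card (J - I)" by (rule card_Un_disjoint) (use assms in auto)
  moreover have "I \<union> (J - I) = I \<union> J" by blast
  ultimately have "card (I \<union> J) = card I + card (J - I)" by simp
  moreover have "card I = card (I \<inter> J) + card (I - J)" using assms(1) by (rule card_Int_Diff)
  ultimately show ?thesis by simp
qed

lemma mbinom_H2: "mbinom d (H2op d) b = Dg d (\<lambda>x. of_nat (x choose b))"
  by (simp add: H2op_Dg mbinom_Dg binomial_gbinomial)

lemma mbinom_H1: "mbinom d (H1op d) b = Dg d (\<lambda>x. of_nat ((d - x) choose b))"
  by (simp add: H1op_Dg mbinom_Dg binomial_gbinomial)

lemma B1_wd:
  assumes I: "I \<subseteq> {..<d}" and J: "J \<subseteq> {..<d}"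
  shows "B1 d t (wd d I) (wd d J) = of_int (beta1 t (cnt I J))"
proof -
  obtain a b c where t: "t = (a,b,c)" by (cases t) auto
  show ?thesis
    unfolding t B1_def mbinom_H2 using FDE_wd[OF I J] G_lemma[OF I J]
    by (simp add: beta1_def cnt_def)
qed

lemma B2_wd:
  assumes I: "I \<subseteq> {..<d}" and J: "J \<subseteq> {..<d}"
  shows "B2 d t (wd d I) (wd d J) = of_int (beta2 d t (cnt I J))"
proof -
  obtain a b c where t: "t = (a,b,c)" by (cases t) auto
  have I': "{..<d} - I \<subseteq> {..<d}" and J': "{..<d} - J \<subseteq> {..<d}" by auto
  have e1: "({..<d} - I) - ({..<d} - J) = J - I" using I J by blast
  have e2: "({..<d} - J) - ({..<d} - I) = I - J" using I J by blast
  have e3: "({..<d} - I) \<inter> ({..<d} - J) = {..<d} - (I \<union> J)" by blast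
  have fI: "finite I" and fJ: "finite J" using I J finite_sub_lessThan by auto
  have c3: "card ({..<d} - (I \<union> J)) = d - (card (I \<inter> J) + card (I - J) + card (J - I))"
    using I J fI fJ by (simp add: card_Diff_subset card_Un3)
  have le: "card ({..<d} - (I \<union> J)) \<le> d" using c3 by simp
  let ?h = "\<lambda>x. of_nat ((d - (d - x)) choose b) :: rat"
  have "B2 d t (wd d I) (wd d J) = (\<Sum>M\<in>Pow {..<d}. gg a M ({..<d} - I) *
      (?h (card M) * gg c M ({..<d} - J)))"
    unfolding t B2_def mbinom_H1 using EDF_wd[OF I J] sum_compl[OF I J] by simp
  also have "\<dots> = (if card (({..<d} - I) - ({..<d} - J)) \<le> a \<and> card (({..<d} - J) - ({..<d} - I)) \<le> c
      \<and> a - card (({..<d} - I) - ({..<d} - J)) = c - card (({..<d} - J) - ({..<d} - I))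
     then of_nat (card (({..<d} - I) \<inter> ({..<d} - J)) choose (a - card (({..<d} - I) - ({..<d} - J)))) *
       ?h (card (({..<d} - I) \<inter> ({..<d} - J)) - (a - card (({..<d} - I) - ({..<d} - J))))
     else 0)"
    by (rule G_lemma[OF I' J'])
  also have "\<dots> = of_int (beta2 d t (cnt I J))"
    unfolding e1 e2 e3 using le
    by (simp add: beta2_def cnt_def t c3)
  finally show ?thesis .
qed


definition pre :: "nat \<Rightarrow> (nat \<Rightarrow> nat) \<Rightarrow> nat set \<Rightarrow> nat set" where
  "pre d \<sigma> K = {k\<in>{..<d}. \<sigma> k \<in> K}"

lemma pre_sub: "pre d \<sigma> K \<subseteq> {..<d}" by (auto simp: pre_def)

lemma image_pre: assumes "\<sigma> permutes {..<d}" "K \<subseteq> {..<d}" shows "\<sigma> ` pre d \<sigma> K = K"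
proof
  show "\<sigma> ` pre d \<sigma> K \<subseteq> K" by (auto simp: pre_def)
  show "K \<subseteq> \<sigma> ` pre d \<sigma> K"
  proof
    fix y assume y: "y \<in> K"
    hence "y \<in> {..<d}" using assms(2) by blast
    hence "y \<in> \<sigma> ` {..<d}" using permutes_image[OF assms(1)] by simp
    then obtain x where "x \<in> {..<d}" "\<sigma> x = y" by (rule imageE) simp
    thus "y \<in> \<sigma> ` pre d \<sigma> K" using y by (auto simp: pre_def)
  qed
qed

lemma pre_image: assumes "\<sigma> permutes {..<d}" "I \<subseteq> {..<d}" shows "pre d \<sigma> (\<sigma> ` I) = I"
proof -
  have "\<And>k. \<sigma> k \<in> \<sigma> ` I \<longleftrightarrow> k \<in> I" using inj_image_mem_iff[OF permutes_inj[OF assms(1)]] by blast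
  thus ?thesis using assms(2) unfolding pre_def by blast
qed

lemma image_sub: assumes "\<sigma> permutes {..<d}" "I \<subseteq> {..<d}" shows "\<sigma> ` I \<subseteq> {..<d}"
proof -
  have "\<sigma> ` I \<subseteq> \<sigma> ` {..<d}" using assms(2) by (rule image_mono)
  thus ?thesis using permutes_image[OF assms(1)] by simp
qed

lemma placeperm_wd:
  assumes s: "\<sigma> permutes {..<d}" and J: "J \<subseteq> {..<d}" and K: "K \<subseteq> {..<d}"
  shows "placeperm d \<sigma> (wd d J) (wd d K) = (if J = pre d \<sigma> K then 1 else 0)"
proof -
  have "map (\<lambda>k. wd d K ! \<sigma> k) [0..<d] = wd d (pre d \<sigma> K)"
  proof -
    have "\<And>k. k < d \<Longrightarrow> wd d K ! \<sigma> k = (if k \<in> pre d \<sigma> K then 2 else 1)"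
      using permutes_in_image[OF s] by (auto simp: pre_def)
    thus ?thesis by (auto simp: wd_def)
  qed
  thus ?thesis using wd_inj[OF J pre_sub] by (simp add: placeperm_def)
qed

lemma is_mat_placeperm[simp]: "is_mat d (placeperm d \<sigma>)"
  by (auto simp: is_mat_def placeperm_def)

lemma mmul_P_right:
  assumes s: "\<sigma> permutes {..<d}" and I: "I \<subseteq> {..<d}" and K: "K \<subseteq> {..<d}"
  shows "mmul d M (placeperm d \<sigma>) (wd d I) (wd d K) = M (wd d I) (wd d (pre d \<sigma> K))"
proof -
  have "mmul d M (placeperm d \<sigma>) (wd d I) (wd d K) = (\<Sum>J\<in>Pow {..<d}. if J = pre d \<sigma> K then M (wd d I) (wd d J) else 0)"
    unfolding mmul_wd by (rule sum.cong) (auto simp: placeperm_wd[OF s _ K])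
  also have "\<dots> = M (wd d I) (wd d (pre d \<sigma> K))" using pre_sub[of d \<sigma> K] by (simp add: sum.delta')
  finally show ?thesis .
qed

lemma mmul_P_left:
  assumes s: "\<sigma> permutes {..<d}" and I: "I \<subseteq> {..<d}" and K: "K \<subseteq> {..<d}"
  shows "mmul d (placeperm d \<sigma>) M (wd d I) (wd d K) = M (wd d (\<sigma> ` I)) (wd d K)"
proof -
  have "mmul d (placeperm d \<sigma>) M (wd d I) (wd d K) = (\<Sum>J\<in>Pow {..<d}. if J = \<sigma> ` I then M (wd d J) (wd d K) else 0)"
    unfolding mmul_wd
  proof (rule sum.cong[OF refl])
    fix J assume "J \<in> Pow {..<d}"
    hence J: "J \<subseteq> {..<d}" by simp
    have "I = pre d \<sigma> J \<longleftrightarrow> J = \<sigma> ` I"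
      using image_pre[OF s J] pre_image[OF s I] by metis
    thus "placeperm d \<sigma> (wd d I) (wd d J) * M (wd d J) (wd d K) = (if J = \<sigma> ` I then M (wd d J) (wd d K) else 0)"
      by (simp add: placeperm_wd[OF s I J])
  qed
  also have "\<dots> = M (wd d (\<sigma> ` I)) (wd d K)" using image_sub[OF s I] by (simp add: sum.delta')
  finally show ?thesis .
qed

lemma SZ_inv:
  assumes M: "M \<in> SZ d" and s: "\<sigma> permutes {..<d}" and I: "I \<subseteq> {..<d}" and J: "J \<subseteq> {..<d}"
  shows "M (wd d (\<sigma> ` I)) (wd d (\<sigma> ` J)) = M (wd d I) (wd d J)"
proof -
  have c: "mmul d M (placeperm d \<sigma>) = mmul d (placeperm d \<sigma>) M" using M s by (simp add: SZ_def)
  have "M (wd d I) (wd d J) = mmul d M (placeperm d \<sigma>) (wd d I) (wd d (\<sigma> ` J))"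
    using mmul_P_right[OF s I image_sub[OF s J]] pre_image[OF s J] by simp
  also have "\<dots> = M (wd d (\<sigma> ` I)) (wd d (\<sigma> ` J))"
    unfolding c using mmul_P_left[OF s I image_sub[OF s J]] by simp
  finally show ?thesis by simp
qed

lemma SZ_intro:
  assumes M: "is_mat d M"
    and Z: "\<And>I J. I \<subseteq> {..<d} \<Longrightarrow> J \<subseteq> {..<d} \<Longrightarrow> M (wd d I) (wd d J) \<in> \<int>"
    and inv: "\<And>\<sigma> I J. \<sigma> permutes {..<d} \<Longrightarrow> I \<subseteq> {..<d} \<Longrightarrow> J \<subseteq> {..<d} \<Longrightarrow>
               M (wd d (\<sigma> ` I)) (wd d (\<sigma> ` J)) = M (wd d I) (wd d J)"
  shows "M \<in> SZ d"
proof -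
  have "M i j \<in> \<int>" for i j
  proof (cases "i \<in> Idx d \<and> j \<in> Idx d")
    case True
    then obtain I J where "I \<subseteq> {..<d}" "J \<subseteq> {..<d}" "i = wd d I" "j = wd d J"
      by (metis Idx_cases)
    thus ?thesis using Z by simp
  next
    case False thus ?thesis using M by (auto simp: is_mat_def)
  qed
  moreover have "mmul d M (placeperm d \<sigma>) = mmul d (placeperm d \<sigma>) M" if s: "\<sigma> permutes {..<d}" for \<sigma>
  proof (rule mat_eqI[of d])
    fix I K assume I: "I \<subseteq> {..<d}" and K: "K \<subseteq> {..<d}"
    have "mmul d M (placeperm d \<sigma>) (wd d I) (wd d K) = M (wd d I) (wd d (pre d \<sigma> K))"
      by (rule mmul_P_right[OF s I K])
    also have "\<dots> = M (wd d (\<sigma> ` I)) (wd d (\<sigma> ` pre d \<sigma> K))"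
      using inv[OF s I pre_sub] by simp
    also have "\<dots> = M (wd d (\<sigma> ` I)) (wd d K)" using image_pre[OF s K] by simp
    also have "\<dots> = mmul d (placeperm d \<sigma>) M (wd d I) (wd d K)" using mmul_P_left[OF s I K] by simp
    finally show "mmul d M (placeperm d \<sigma>) (wd d I) (wd d K) = mmul d (placeperm d \<sigma>) M (wd d I) (wd d K)" .
  qed (use M in auto)
  ultimately show ?thesis using M by (auto simp: SZ_def)
qed

lemma cnt_inv:
  assumes s: "\<sigma> permutes {..<d}"
  shows "cnt (\<sigma> ` I) (\<sigma> ` J) = cnt I J"
proof -
  have inj: "inj \<sigma>" using permutes_inj[OF s] .
  have "\<sigma> ` I \<inter> \<sigma> ` J = \<sigma> ` (I \<inter> J)" "\<sigma> ` I - \<sigma> ` J = \<sigma> ` (I - J)" "\<sigma> ` J - \<sigma> ` I = \<sigma> ` (J - I)"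
    using inj by (auto simp: image_Int image_set_diff)
  thus ?thesis using inj by (simp add: cnt_def card_image inj_on_subset[OF inj])
qed

lemma SZ_intro_cnt:
  assumes M: "is_mat d M"
    and f: "\<And>I J. I \<subseteq> {..<d} \<Longrightarrow> J \<subseteq> {..<d} \<Longrightarrow> M (wd d I) (wd d J) = of_int (f (cnt I J))"
  shows "M \<in> SZ d"
proof (rule SZ_intro[OF M])
  fix I J assume "I \<subseteq> {..<d}" "J \<subseteq> {..<d}"
  thus "M (wd d I) (wd d J) \<in> \<int>" using f by simp
next
  fix \<sigma> I J assume s: "\<sigma> permutes {..<d}" and I: "I \<subseteq> {..<d}" and J: "J \<subseteq> {..<d}"
  show "M (wd d (\<sigma> ` I)) (wd d (\<sigma> ` J)) = M (wd d I) (wd d J)"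
    using f[OF I J] f[OF image_sub[OF s I] image_sub[OF s J]] cnt_inv[OF s] by simp
qed

lemma orbit:
  fixes d :: nat
  assumes I: "I \<subseteq> {..<d}" and J: "J \<subseteq> {..<d}" and I': "I' \<subseteq> {..<d}" and J': "J' \<subseteq> {..<d}"
    and c: "cnt I J = cnt I' J'"
  shows "\<exists>\<sigma>. \<sigma> permutes {..<d} \<and> \<sigma> ` I = I' \<and> \<sigma> ` J = J'"
proof -
  define U where "U = {..<d}"
  define A1 A2 A3 A4 where "A1 = I \<inter> J" "A2 = I - J" "A3 = J - I" "A4 = U - (I \<union> J)"
  define B1 B2 B3 B4 where "B1 = I' \<inter> J'" "B2 = I' - J'" "B3 = J' - I'" "B4 = U - (I' \<union> J')"
  have fU: "finite U" by (simp add: U_def)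
  have fin: "finite I" "finite J" "finite I'" "finite J'" using I J I' J' finite_sub_lessThan by auto
  have c123: "card A1 = card B1" "card A2 = card B2" "card A3 = card B3"
    using c by (auto simp: cnt_def A1_A2_A3_A4_def B1_B2_B3_B4_def)
  have "card (I \<union> J) = card (I' \<union> J')" using c fin by (simp add: card_Un3 cnt_def)
  hence c4: "card A4 = card B4" using I J I' J' fin
    by (simp add: A1_A2_A3_A4_def B1_B2_B3_B4_def U_def card_Diff_subset)
  have finA: "finite A1" "finite A2" "finite A3" "finite A4" using fin fU by (auto simp: A1_A2_A3_A4_def)
  have finB: "finite B1" "finite B2" "finite B3" "finite B4" using fin fU by (auto simp: B1_B2_B3_B4_def)
  obtain f1 where f1: "bij_betw f1 A1 B1" using finite_same_card_bij[OF finA(1) finB(1) c123(1)] by blast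
  obtain f2 where f2: "bij_betw f2 A2 B2" using finite_same_card_bij[OF finA(2) finB(2) c123(2)] by blast
  obtain f3 where f3: "bij_betw f3 A3 B3" using finite_same_card_bij[OF finA(3) finB(3) c123(3)] by blast
  obtain f4 where f4: "bij_betw f4 A4 B4" using finite_same_card_bij[OF finA(4) finB(4) c4] by blast
  define \<sigma> where "\<sigma> x = (if x \<in> A1 then f1 x else if x \<in> A2 then f2 x else if x \<in> A3 then f3 x
     else if x \<in> A4 then f4 x else x)" for x
  have dA: "A1 \<inter> A2 = {}" "A1 \<inter> A3 = {}" "A2 \<inter> A3 = {}" "A1 \<inter> A4 = {}" "A2 \<inter> A4 = {}" "A3 \<inter> A4 = {}"
    by (auto simp: A1_A2_A3_A4_def)
  have dB: "B1 \<inter> B2 = {}" "(B1 \<union> B2) \<inter> B3 = {}" "(B1 \<union> B2 \<union> B3) \<inter> B4 = {}"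
    by (auto simp: B1_B2_B3_B4_def)
  have s1: "bij_betw \<sigma> A1 B1" using f1 by (rule bij_betw_cong[THEN iffD1, rotated]) (simp add: \<sigma>_def)
  have s2: "bij_betw \<sigma> A2 B2" using f2 by (rule bij_betw_cong[THEN iffD1, rotated]) (use dA in \<open>auto simp: \<sigma>_def\<close>)
  have s3: "bij_betw \<sigma> A3 B3" using f3 by (rule bij_betw_cong[THEN iffD1, rotated]) (use dA in \<open>auto simp: \<sigma>_def\<close>)
  have s4: "bij_betw \<sigma> A4 B4" using f4 by (rule bij_betw_cong[THEN iffD1, rotated]) (use dA in \<open>auto simp: \<sigma>_def\<close>)
  have "bij_betw \<sigma> (A1 \<union> A2 \<union> A3 \<union> A4) (B1 \<union> B2 \<union> B3 \<union> B4)"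
    by (intro bij_betw_combine s1 s2 s3 s4 dB)
  moreover have "A1 \<union> A2 \<union> A3 \<union> A4 = U" using I J by (auto simp: A1_A2_A3_A4_def U_def)
  moreover have "B1 \<union> B2 \<union> B3 \<union> B4 = U" using I' J' by (auto simp: B1_B2_B3_B4_def U_def)
  ultimately have bU: "bij_betw \<sigma> U U" by simp
  have "\<sigma> permutes U"
  proof (rule bij_imp_permutes[OF bU])
    fix x assume "x \<notin> U"
    hence "x \<notin> A1" "x \<notin> A2" "x \<notin> A3" "x \<notin> A4" using I J by (auto simp: A1_A2_A3_A4_def U_def)
    thus "\<sigma> x = x" by (simp add: \<sigma>_def)
  qed
  moreover have "\<sigma> ` I = I'"
  proof -
    have "I = A1 \<union> A2" by (auto simp: A1_A2_A3_A4_def)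
    hence "\<sigma> ` I = \<sigma> ` A1 \<union> \<sigma> ` A2" by auto
    also have "\<dots> = B1 \<union> B2" using s1 s2 by (simp add: bij_betw_imp_surj_on)
    also have "\<dots> = I'" by (auto simp: B1_B2_B3_B4_def)
    finally show ?thesis .
  qed
  moreover have "\<sigma> ` J = J'"
  proof -
    have "J = A1 \<union> A3" by (auto simp: A1_A2_A3_A4_def)
    hence "\<sigma> ` J = \<sigma> ` A1 \<union> \<sigma> ` A3" by auto
    also have "\<dots> = B1 \<union> B3" using s1 s3 by (simp add: bij_betw_imp_surj_on)
    also have "\<dots> = J'" by (auto simp: B1_B2_B3_B4_def)
    finally show ?thesis .
  qed
  ultimately show ?thesis unfolding U_def by blast
qed

lemma SZ_cnt:
  assumes M: "M \<in> SZ d" and I: "I \<subseteq> {..<d}" and J: "J \<subseteq> {..<d}" and I': "I' \<subseteq> {..<d}" and J': "J' \<subseteq> {..<d}"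
    and c: "cnt I J = cnt I' J'"
  shows "M (wd d I) (wd d J) = M (wd d I') (wd d J')"
proof -
  obtain \<sigma> where "\<sigma> permutes {..<d}" "\<sigma> ` I = I'" "\<sigma> ` J = J'" using orbit[OF I J I' J' c] by blast
  thus ?thesis using SZ_inv[OF M _ I J] by metis
qed

definition repI :: "nat \<times> nat \<times> nat \<Rightarrow> nat set" where
  "repI o' = (case o' of (p,q,r) \<Rightarrow> {..<p+q})"
definition repJ :: "nat \<times> nat \<times> nat \<Rightarrow> nat set" where
  "repJ o' = (case o' of (p,q,r) \<Rightarrow> {..<p} \<union> {p+q..<p+q+r})"

lemma rep_props:
  assumes "o' \<in> triples d"
  shows "repI o' \<subseteq> {..<d}" "repJ o' \<subseteq> {..<d}" "cnt (repI o') (repJ o') = o'"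
proof -
  obtain p q r where o: "o' = (p,q,r)" by (cases o') auto
  have le: "p + q + r \<le> d" using assms o by (simp add: triples_def)
  show "repI o' \<subseteq> {..<d}" "repJ o' \<subseteq> {..<d}" using le by (auto simp: o repI_def repJ_def)
  have "{..<p+q} \<inter> ({..<p} \<union> {p+q..<p+q+r}) = {..<p}" by auto
  moreover have "{..<p+q} - ({..<p} \<union> {p+q..<p+q+r}) = {p..<p+q}" by auto
  moreover have "({..<p} \<union> {p+q..<p+q+r}) - {..<p+q} = {p+q..<p+q+r}" by auto
  ultimately show "cnt (repI o') (repJ o') = o'" by (simp add: o repI_def repJ_def cnt_def)
qed

lemma cnt_triples:
  assumes I: "I \<subseteq> {..<d}" and J: "J \<subseteq> {..<d}"
  shows "cnt I J \<in> triples d"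
proof -
  have "card (I \<union> J) \<le> d" using I J by (metis card_lessThan card_mono finite_lessThan le_sup_iff)
  thus ?thesis using I J finite_sub_lessThan by (simp add: cnt_def triples_def card_Un3)
qed

definition coef :: "nat \<Rightarrow> mat \<Rightarrow> nat \<times> nat \<times> nat \<Rightarrow> rat" where
  "coef d M o' = M (wd d (repI o')) (wd d (repJ o'))"

lemma SZ_coef:
  assumes M: "M \<in> SZ d" and I: "I \<subseteq> {..<d}" and J: "J \<subseteq> {..<d}"
  shows "M (wd d I) (wd d J) = coef d M (cnt I J)"
  unfolding coef_def
  using SZ_cnt[OF M I J rep_props(1,2)[OF cnt_triples[OF I J]]] rep_props(3)[OF cnt_triples[OF I J]] by simp

lemma SZ_coef_int: assumes "M \<in> SZ d" shows "coef d M o' \<in> \<int>"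
  using assms by (simp add: SZ_def coef_def)


lemma tri_exists:
  fixes Tt :: "'t set" and Oo :: "'o set" and \<phi> :: "'t \<Rightarrow> 'o" and \<beta> :: "'t \<Rightarrow> 'o \<Rightarrow> int" and rk :: "'o \<Rightarrow> nat"
  assumes fin: "finite Tt" and bij: "bij_betw \<phi> Tt Oo"
    and diag: "\<And>t. t \<in> Tt \<Longrightarrow> \<beta> t (\<phi> t) = 1"
    and tri: "\<And>t o'. t \<in> Tt \<Longrightarrow> o' \<in> Oo \<Longrightarrow> \<beta> t o' \<noteq> 0 \<Longrightarrow> o' \<noteq> \<phi> t \<Longrightarrow> rk o' < rk (\<phi> t)"
  shows "\<exists>c. (\<forall>t. t \<notin> Tt \<longrightarrow> c t = 0) \<and> (\<forall>o'\<in>Oo. g o' = (\<Sum>t\<in>Tt. c t * \<beta> t o'))"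
proof -
  have inj: "inj_on \<phi> Tt" using bij by (simp add: bij_betw_def)
  have img: "\<phi> ` Tt = Oo" using bij by (simp add: bij_betw_def)
  have phiO: "\<phi> s \<in> Oo" if "s \<in> Tt" for s using img that by blast
  define N where "N = Suc (\<Sum>s\<in>Tt. rk (\<phi> s))"
  have rkN: "rk (\<phi> s) < N" if "s \<in> Tt" for s
    using member_le_sum[of s Tt "\<lambda>s. rk (\<phi> s)"] that fin by (simp add: N_def)
  define P where "P k \<longleftrightarrow> (\<exists>c. (\<forall>t. t \<notin> Tt \<longrightarrow> c t = 0) \<and>
      (\<forall>s\<in>Tt. k \<le> rk (\<phi> s) \<longrightarrow> g (\<phi> s) = (\<Sum>t\<in>Tt. c t * \<beta> t (\<phi> s))))" for k
  have "P 0"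
  proof (rule inc_induct[of 0 N P])
    show "P N" unfolding P_def using rkN by (intro exI[of _ "\<lambda>_. 0"]) (auto simp: not_le[symmetric])
  next
    fix k assume "0 \<le> k" "k < N" and PS: "P (Suc k)"
    then obtain c where c0: "\<forall>t. t \<notin> Tt \<longrightarrow> c t = 0"
      and ceq: "\<forall>s\<in>Tt. Suc k \<le> rk (\<phi> s) \<longrightarrow> g (\<phi> s) = (\<Sum>t\<in>Tt. c t * \<beta> t (\<phi> s))"
      unfolding P_def by blast
    define c' where "c' t = (if t \<in> Tt \<and> rk (\<phi> t) = k then g (\<phi> t) - (\<Sum>t'\<in>Tt - {t}. c t' * \<beta> t' (\<phi> t)) else c t)" for t
    have c'0: "\<forall>t. t \<notin> Tt \<longrightarrow> c' t = 0" using c0 by (simp add: c'_def)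
    have "\<forall>s\<in>Tt. k \<le> rk (\<phi> s) \<longrightarrow> g (\<phi> s) = (\<Sum>t\<in>Tt. c' t * \<beta> t (\<phi> s))"
    proof (intro ballI impI)
      fix s assume s: "s \<in> Tt" and ks: "k \<le> rk (\<phi> s)"
      show "g (\<phi> s) = (\<Sum>t\<in>Tt. c' t * \<beta> t (\<phi> s))"
      proof (cases "rk (\<phi> s) = k")
        case False
        hence sk: "Suc k \<le> rk (\<phi> s)" using ks by simp
        have "(\<Sum>t\<in>Tt. c' t * \<beta> t (\<phi> s)) = (\<Sum>t\<in>Tt. c t * \<beta> t (\<phi> s))"
        proof (rule sum.cong[OF refl])
          fix t assume t: "t \<in> Tt"
          show "c' t * \<beta> t (\<phi> s) = c t * \<beta> t (\<phi> s)"
          proof (cases "rk (\<phi> t) = k")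
            case True
            have "\<beta> t (\<phi> s) = 0"
            proof (rule ccontr)
              assume nz: "\<beta> t (\<phi> s) \<noteq> 0"
              have "\<phi> s \<noteq> \<phi> t" using True sk by auto
              hence "rk (\<phi> s) < rk (\<phi> t)" using tri[OF t phiO[OF s] nz] by simp
              thus False using True sk by simp
            qed
            thus ?thesis by simp
          next
            case False thus ?thesis by (simp add: c'_def)
          qed
        qed
        thus ?thesis using ceq s sk by simp
      next
        case True
        have rest: "(\<Sum>t\<in>Tt - {s}. c' t * \<beta> t (\<phi> s)) = (\<Sum>t\<in>Tt - {s}. c t * \<beta> t (\<phi> s))"
        proof (rule sum.cong[OF refl])
          fix t assume t: "t \<in> Tt - {s}"
          show "c' t * \<beta> t (\<phi> s) = c t * \<beta> t (\<phi> s)"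
          proof (cases "rk (\<phi> t) = k")
            case True2: True
            have "\<beta> t (\<phi> s) = 0"
            proof (rule ccontr)
              assume nz: "\<beta> t (\<phi> s) \<noteq> 0"
              have "\<phi> s \<noteq> \<phi> t" using t s inj by (auto simp: inj_on_def)
              hence "rk (\<phi> s) < rk (\<phi> t)" using tri[of t "\<phi> s"] t phiO[OF s] nz by simp
              thus False using True True2 by simp
            qed
            thus ?thesis by simp
          next
            case False thus ?thesis by (simp add: c'_def)
          qed
        qed
        have "(\<Sum>t\<in>Tt. c' t * \<beta> t (\<phi> s)) = c' s * \<beta> s (\<phi> s) + (\<Sum>t\<in>Tt - {s}. c' t * \<beta> t (\<phi> s))"
          using fin s by (simp add: sum.remove)
        also have "\<dots> = g (\<phi> s)" using rest diag[OF s] True s by (simp add: c'_def)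
        finally show ?thesis by simp
      qed
    qed
    thus "P k" unfolding P_def using c'0 by blast
  qed simp
  then obtain c where c0: "\<forall>t. t \<notin> Tt \<longrightarrow> c t = 0"
    and ceq: "\<forall>s\<in>Tt. g (\<phi> s) = (\<Sum>t\<in>Tt. c t * \<beta> t (\<phi> s))" unfolding P_def by auto
  have "\<forall>o'\<in>Oo. g o' = (\<Sum>t\<in>Tt. c t * \<beta> t o')"
  proof
    fix o' assume "o' \<in> Oo"
    then obtain s where "s \<in> Tt" "o' = \<phi> s" using img by blast
    thus "g o' = (\<Sum>t\<in>Tt. c t * \<beta> t o')" using ceq by simp
  qed
  thus ?thesis using c0 by blast
qed

lemma tri_unique:
  fixes Tt :: "'t set" and Oo :: "'o set" and \<phi> :: "'t \<Rightarrow> 'o" and \<beta> :: "'t \<Rightarrow> 'o \<Rightarrow> int" and rk :: "'o \<Rightarrow> nat"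
  assumes fin: "finite Tt" and bij: "bij_betw \<phi> Tt Oo"
    and diag: "\<And>t. t \<in> Tt \<Longrightarrow> \<beta> t (\<phi> t) = 1"
    and tri: "\<And>t o'. t \<in> Tt \<Longrightarrow> o' \<in> Oo \<Longrightarrow> \<beta> t o' \<noteq> 0 \<Longrightarrow> o' \<noteq> \<phi> t \<Longrightarrow> rk o' < rk (\<phi> t)"
    and c1: "\<forall>t. t \<notin> Tt \<longrightarrow> c1 t = 0" "\<forall>o'\<in>Oo. g o' = (\<Sum>t\<in>Tt. c1 t * \<beta> t o')"
    and c2: "\<forall>t. t \<notin> Tt \<longrightarrow> c2 t = 0" "\<forall>o'\<in>Oo. g o' = (\<Sum>t\<in>Tt. c2 t * \<beta> t o')"
  shows "c1 = c2"
proof -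
  have inj: "inj_on \<phi> Tt" using bij by (simp add: bij_betw_def)
  have img: "\<phi> ` Tt = Oo" using bij by (simp add: bij_betw_def)
  have phiO: "\<phi> s \<in> Oo" if "s \<in> Tt" for s using img that by blast
  define N where "N = Suc (\<Sum>s\<in>Tt. rk (\<phi> s))"
  have rkN: "rk (\<phi> s) < N" if "s \<in> Tt" for s
    using member_le_sum[of s Tt "\<lambda>s. rk (\<phi> s)"] that fin by (simp add: N_def)
  define dd where "dd t = c1 t - c2 t" for t
  have eq0: "(\<Sum>t\<in>Tt. dd t * \<beta> t o') = 0" if "o' \<in> Oo" for o'
    using c1(2) c2(2) that by (simp add: dd_def left_diff_distrib sum_subtractf)
  have "dd t = 0" if "t \<in> Tt" for t
    using that
  proof (induct t rule: measure_induct_rule[where f = "\<lambda>t. N - rk (\<phi> t)"])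
    case (less t)
    have rest: "(\<Sum>t'\<in>Tt - {t}. dd t' * \<beta> t' (\<phi> t)) = 0"
    proof (rule sum.neutral, rule ballI)
      fix t' assume t': "t' \<in> Tt - {t}"
      show "dd t' * \<beta> t' (\<phi> t) = 0"
      proof (cases "\<beta> t' (\<phi> t) = 0")
        case False
        have "\<phi> t \<noteq> \<phi> t'" using t' less.prems inj by (auto simp: inj_on_def)
        hence "rk (\<phi> t) < rk (\<phi> t')" using tri[of t' "\<phi> t"] t' phiO[OF less.prems] False by simp
        moreover have "rk (\<phi> t') < N" using rkN t' by simp
        ultimately have "N - rk (\<phi> t') < N - rk (\<phi> t)" by arith
        hence "dd t' = 0" using less.hyps t' by simp
        thus ?thesis by simp
      qed simp
    qed
    have "0 = (\<Sum>t'\<in>Tt. dd t' * \<beta> t' (\<phi> t))" using eq0[OF phiO[OF less.prems]] by simp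
    also have "\<dots> = dd t * \<beta> t (\<phi> t) + (\<Sum>t'\<in>Tt - {t}. dd t' * \<beta> t' (\<phi> t))"
      using fin less.prems by (simp add: sum.remove)
    also have "\<dots> = dd t" using rest diag[OF less.prems] by simp
    finally show ?case by simp
  qed
  thus ?thesis using c1(1) c2(1) by (auto simp: dd_def fun_eq_iff) (metis eq_iff_diff_eq_0)
qed

lemma Ints_floor_eq: "(x::rat) \<in> \<int> \<Longrightarrow> of_int (floor x) = x"
  by (metis Ints_cases floor_of_int)

lemma basis_from_tri:
  fixes d :: nat and B :: "nat \<times> nat \<times> nat \<Rightarrow> mat" and rk :: "nat \<times> nat \<times> nat \<Rightarrow> nat"
    and \<beta> :: "nat \<times> nat \<times> nat \<Rightarrow> nat \<times> nat \<times> nat \<Rightarrow> int" and \<phi> :: "nat \<times> nat \<times> nat \<Rightarrow> nat \<times> nat \<times> nat"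
  assumes Bin: "\<And>t. t \<in> triples d \<Longrightarrow> B t \<in> SZ d"
    and Bmat: "\<And>t. is_mat d (B t)"
    and Bval: "\<And>t I J. I \<subseteq> {..<d} \<Longrightarrow> J \<subseteq> {..<d} \<Longrightarrow> B t (wd d I) (wd d J) = of_int (\<beta> t (cnt I J))"
    and bij: "bij_betw \<phi> (triples d) (triples d)"
    and diag: "\<And>t. t \<in> triples d \<Longrightarrow> \<beta> t (\<phi> t) = 1"
    and tri: "\<And>t o'. t \<in> triples d \<Longrightarrow> o' \<in> triples d \<Longrightarrow> \<beta> t o' \<noteq> 0 \<Longrightarrow> o' \<noteq> \<phi> t \<Longrightarrow> rk o' < rk (\<phi> t)"
  shows "is_Z_basis (SZ d) (triples d) B"
proof -
  have finT: "finite (triples d)"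
  proof -
    have "triples d \<subseteq> {..d} \<times> {..d} \<times> {..d}" by (auto simp: triples_def)
    thus ?thesis by (rule finite_subset) simp
  qed
  have main: "\<exists>!c::nat\<times>nat\<times>nat \<Rightarrow> int. (\<forall>t. t \<notin> triples d \<longrightarrow> c t = 0) \<and>
        M = (\<lambda>i j. \<Sum>t\<in>triples d. of_int (c t) * B t i j)" if M: "M \<in> SZ d" for M
  proof -
    define g where "g o' = floor (coef d M o')" for o'
    have g: "of_int (g o') = coef d M o'" for o' using SZ_coef_int[OF M] by (simp add: g_def Ints_floor_eq)
    have Mmat: "is_mat d M" using M by (simp add: SZ_def)
    have equiv: "(M = (\<lambda>i j. \<Sum>t\<in>triples d. of_int (c t) * B t i j)) \<longleftrightarrow>
        (\<forall>o'\<in>triples d. g o' = (\<Sum>t\<in>triples d. c t * \<beta> t o'))" for c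
    proof
      assume H: "M = (\<lambda>i j. \<Sum>t\<in>triples d. of_int (c t) * B t i j)"
      show "\<forall>o'\<in>triples d. g o' = (\<Sum>t\<in>triples d. c t * \<beta> t o')"
      proof
        fix o' assume o: "o' \<in> triples d"
        note rp = rep_props[OF o]
        have "of_int (g o') = M (wd d (repI o')) (wd d (repJ o'))" using g by (simp add: coef_def)
        also have "\<dots> = (\<Sum>t\<in>triples d. of_int (c t) * of_int (\<beta> t o'))"
          by (subst H) (simp add: Bval[OF rp(1,2)] rp(3))
        also have "\<dots> = of_int (\<Sum>t\<in>triples d. c t * \<beta> t o')" by simp
        finally show "g o' = (\<Sum>t\<in>triples d. c t * \<beta> t o')" by (simp only: of_int_eq_iff)
      qed
    next
      assume H: "\<forall>o'\<in>triples d. g o' = (\<Sum>t\<in>triples d. c t * \<beta> t o')"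
      show "M = (\<lambda>i j. \<Sum>t\<in>triples d. of_int (c t) * B t i j)"
      proof (rule mat_eqI[OF Mmat])
        show "is_mat d (\<lambda>i j. \<Sum>t\<in>triples d. of_int (c t) * B t i j)"
          using Bmat by (auto simp: is_mat_def)
      next
        fix I J assume I: "I \<subseteq> {..<d}" and J: "J \<subseteq> {..<d}"
        have "M (wd d I) (wd d J) = of_int (g (cnt I J))" using SZ_coef[OF M I J] g by simp
        also have "\<dots> = of_int (\<Sum>t\<in>triples d. c t * \<beta> t (cnt I J))" using H cnt_triples[OF I J] by simp
        also have "\<dots> = (\<Sum>t\<in>triples d. of_int (c t) * B t (wd d I) (wd d J))" by (simp add: Bval[OF I J])
        finally show "M (wd d I) (wd d J) = (\<lambda>i j. \<Sum>t\<in>triples d. of_int (c t) * B t i j) (wd d I) (wd d J)" by simp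
      qed
    qed
    obtain c where c: "\<forall>t. t \<notin> triples d \<longrightarrow> c t = 0" "\<forall>o'\<in>triples d. g o' = (\<Sum>t\<in>triples d. c t * \<beta> t o')"
      using tri_exists[where Tt="triples d" and Oo="triples d" and \<phi>=\<phi> and \<beta>=\<beta> and rk=rk and g=g, OF finT bij diag tri] by blast
    show ?thesis
    proof (rule ex1I[of _ c])
      show "(\<forall>t. t \<notin> triples d \<longrightarrow> c t = 0) \<and> M = (\<lambda>i j. \<Sum>t\<in>triples d. of_int (c t) * B t i j)"
        using c equiv by blast
    next
      fix c2 assume "(\<forall>t. t \<notin> triples d \<longrightarrow> c2 t = 0) \<and> M = (\<lambda>i j. \<Sum>t\<in>triples d. of_int (c2 t) * B t i j)"
      hence c2: "\<forall>t. t \<notin> triples d \<longrightarrow> c2 t = 0" "\<forall>o'\<in>triples d. g o' = (\<Sum>t\<in>triples d. c2 t * \<beta> t o')"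
        using equiv by blast+
      show "c2 = c" using tri_unique[where Tt="triples d" and Oo="triples d" and \<phi>=\<phi> and \<beta>=\<beta> and rk=rk and g=g, OF finT bij diag tri c2 c] .
    qed
  qed
  show ?thesis unfolding is_Z_basis_def using Bin main by blast
qed


lemma B1_SZ: "B1 d t \<in> SZ d"
  by (rule SZ_intro_cnt[OF is_mat_B1 B1_wd])
lemma B2_SZ: "B2 d t \<in> SZ d"
  by (rule SZ_intro_cnt[OF is_mat_B2 B2_wd])

lemma lt_block:
  fixes q a d x y :: nat
  assumes "q < a" "x \<le> d"
  shows "q * (d + 1) + x < a * (d + 1) + y"
proof -
  have "Suc q * (d + 1) \<le> a * (d + 1)" using assms(1) by (intro mult_le_mono1) simp
  thus ?thesis using assms(2) by simp
qed

lemma basis1: "is_Z_basis (SZ d) (triples d) (B1 d)"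
proof (rule basis_from_tri[where \<beta> = beta1 and \<phi> = "\<lambda>(a,b,c). (b,a,c)" and rk = "\<lambda>(p,q,r). q * (d+1) + (d - p)"])
  show "\<And>t. t \<in> triples d \<Longrightarrow> B1 d t \<in> SZ d" by (rule B1_SZ)
  show "\<And>t. is_mat d (B1 d t)" by simp
  show "\<And>t I J. I \<subseteq> {..<d} \<Longrightarrow> J \<subseteq> {..<d} \<Longrightarrow> B1 d t (wd d I) (wd d J) = of_int (beta1 t (cnt I J))"
    by (rule B1_wd)
  show "bij_betw (\<lambda>(a,b,c). (b,a,c)) (triples d) (triples d)"
    by (rule bij_betw_byWitness[where f' = "\<lambda>(a,b,c). (b,a,c)"]) (auto simp: triples_def)
  show "\<And>t. t \<in> triples d \<Longrightarrow> beta1 t ((\<lambda>(a,b,c). (b,a,c)) t) = 1"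
    by (auto simp: beta1_def)
  fix t o' assume t: "t \<in> triples d" and o: "o' \<in> triples d" and nz: "beta1 t o' \<noteq> 0"
    and ne: "o' \<noteq> (\<lambda>(a,b,c). (b,a,c)) t"
  obtain a b c where tt: "t = (a,b,c)" by (cases t) auto
  obtain p q r where oo: "o' = (p,q,r)" by (cases o') auto
  have C: "q \<le> a" "r \<le> c" "a - q = c - r" "(p choose (a - q)) \<noteq> 0" "((p - (a - q)) choose b) \<noteq> 0"
    using nz by (auto simp: beta1_def tt oo split: if_splits)
  have pd: "p \<le> d" using o oo by (simp add: triples_def)
  show "(\<lambda>(p,q,r). q * (d+1) + (d - p)) o' < (\<lambda>(p,q,r). q * (d+1) + (d - p)) ((\<lambda>(a,b,c). (b,a,c)) t)"
  proof (cases "q < a")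
    case True
    have "q * (d+1) + (d - p) < a * (d+1) + (d - b)" by (rule lt_block) (use True in auto)
    thus ?thesis by (simp add: tt oo)
  next
    case False
    hence qa: "q = a" using C by simp
    hence rc: "r = c" using C by simp
    have "b \<le> p" using C(5) qa by (simp add: binomial_eq_0_iff)
    moreover have "p \<noteq> b" using ne qa rc by (simp add: tt oo)
    ultimately show ?thesis using pd by (simp add: tt oo qa)
  qed
qed

lemma basis2: "is_Z_basis (SZ d) (triples d) (B2 d)"
proof (rule basis_from_tri[where \<beta> = "beta2 d" and \<phi> = "\<lambda>(a,b,c). (d - (a+b+c), c, a)" and rk = "\<lambda>(p,q,r). r * (d+1) + (p+q+r)"])
  show "\<And>t. t \<in> triples d \<Longrightarrow> B2 d t \<in> SZ d" by (rule B2_SZ)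
  show "\<And>t. is_mat d (B2 d t)" by simp
  show "\<And>t I J. I \<subseteq> {..<d} \<Longrightarrow> J \<subseteq> {..<d} \<Longrightarrow> B2 d t (wd d I) (wd d J) = of_int (beta2 d t (cnt I J))"
    by (rule B2_wd)
  show "bij_betw (\<lambda>(a,b,c). (d - (a+b+c), c, a)) (triples d) (triples d)"
    by (rule bij_betw_byWitness[where f' = "\<lambda>(p,q,r). (r, d - (p+q+r), q)"]) (auto simp: triples_def)
  show "\<And>t. t \<in> triples d \<Longrightarrow> beta2 d t ((\<lambda>(a,b,c). (d - (a+b+c), c, a)) t) = 1"
    by (auto simp: beta2_def triples_def)
  fix t o' assume t: "t \<in> triples d" and o: "o' \<in> triples d" and nz: "beta2 d t o' \<noteq> 0"
    and ne: "o' \<noteq> (\<lambda>(a,b,c). (d - (a+b+c), c, a)) t"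
  obtain a b c where tt: "t = (a,b,c)" by (cases t) auto
  obtain p q r where oo: "o' = (p,q,r)" by (cases o') auto
  have C: "r \<le> a" "q \<le> c" "a - r = c - q" "((d - (p+q+r)) choose (a - r)) \<noteq> 0"
      "((d - (p+q+r) - (a - r)) choose b) \<noteq> 0"
    using nz by (auto simp: beta2_def tt oo split: if_splits)
  have pd: "p + q + r \<le> d" using o oo by (simp add: triples_def)
  have td: "a + b + c \<le> d" using t tt by (simp add: triples_def)
  show "(\<lambda>(p,q,r). r * (d+1) + (p+q+r)) o' < (\<lambda>(p,q,r). r * (d+1) + (p+q+r)) ((\<lambda>(a,b,c). (d - (a+b+c), c, a)) t)"
  proof (cases "r < a")
    case True
    have "r * (d+1) + (p+q+r) < a * (d+1) + (d - (a+b+c) + c + a)" by (rule lt_block) (use True pd in auto)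
    thus ?thesis by (simp add: tt oo)
  next
    case False
    hence ra: "r = a" using C by simp
    hence qc: "q = c" using C by simp
    have "b \<le> d - (p+q+r)" using C(5) ra by (simp add: binomial_eq_0_iff)
    moreover have "d - (p+q+r) \<noteq> b" using ne ra qc pd td by (auto simp: tt oo)
    ultimately show ?thesis using pd td by (simp add: tt oo ra qc)
  qed
qed


abbreviation R where "R d \<equiv> divpow_ring d"

lemma msmult_nat_R: "M \<in> R d \<Longrightarrow> msmult (of_nat n) M \<in> R d"
proof (induct n)
  case 0
  have "msmult (of_nat 0) M = (\<lambda>i j. 0)" by (simp add: msmult_def)
  thus ?case using divpow_ring.zero by simp
next
  case (Suc n)
  have "msmult (of_nat (Suc n)) M = madd M (msmult (of_nat n) M)"
    by (simp add: msmult_def madd_def algebra_simps)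
  thus ?case using Suc divpow_ring.add by simp
qed

lemma msmult_int_R: assumes "M \<in> R d" shows "msmult (of_int z) M \<in> R d"
proof (cases "0 \<le> z")
  case True
  hence "msmult (of_int z) M = msmult (of_nat (nat z)) M" by simp
  thus ?thesis using msmult_nat_R[OF assms] by simp
next
  case False
  hence "msmult (of_int z) M = mneg (msmult (of_nat (nat (- z))) M)"
    by (simp add: msmult_def mneg_def)
  thus ?thesis using msmult_nat_R[OF assms] divpow_ring.neg by simp
qed

lemma msum_R:
  assumes "finite S" "\<And>u. u \<in> S \<Longrightarrow> X u \<in> R d"
  shows "(\<lambda>i j. \<Sum>u\<in>S. X u i j) \<in> R d"
  using assms
proof (induct S rule: finite_induct)
  case empty
  thus ?case using divpow_ring.zero by simp
next
  case (insert x F)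
  have "(\<lambda>i j. \<Sum>u\<in>insert x F. X u i j) = madd (X x) (\<lambda>i j. \<Sum>u\<in>F. X u i j)"
    using insert by (simp add: madd_def)
  thus ?case using insert divpow_ring.add by simp
qed

lemma SZ_mul: assumes "M \<in> SZ d" "N \<in> SZ d" shows "mmul d M N \<in> SZ d"
proof -
  have Mm: "is_mat d M" "\<forall>i j. M i j \<in> \<int>" and Nm: "is_mat d N" "\<forall>i j. N i j \<in> \<int>"
    using assms by (auto simp: SZ_def)
  have "mmul d (mmul d M N) (placeperm d \<sigma>) = mmul d (placeperm d \<sigma>) (mmul d M N)"
    if "\<sigma> permutes {..<d}" for \<sigma>
  proof -
    have cM: "mmul d M (placeperm d \<sigma>) = mmul d (placeperm d \<sigma>) M" using assms(1) that by (simp add: SZ_def)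
    have cN: "mmul d N (placeperm d \<sigma>) = mmul d (placeperm d \<sigma>) N" using assms(2) that by (simp add: SZ_def)
    let ?P = "placeperm d \<sigma>"
    have "mmul d (mmul d M N) ?P = mmul d M (mmul d N ?P)" by (rule mmul_assoc)
    also have "\<dots> = mmul d M (mmul d ?P N)" by (simp add: cN)
    also have "\<dots> = mmul d (mmul d M ?P) N" by (rule mmul_assoc[symmetric])
    also have "\<dots> = mmul d (mmul d ?P M) N" by (simp add: cM)
    also have "\<dots> = mmul d ?P (mmul d M N)" by (rule mmul_assoc)
    finally show ?thesis .
  qed
  moreover have "mmul d M N i j \<in> \<int>" for i j
    using Mm Nm by (auto simp: mmul_def intro!: Ints_sum Ints_mult)
  ultimately show ?thesis using Mm Nm by (simp add: SZ_def)
qed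

lemma SZ_add: assumes "M \<in> SZ d" "N \<in> SZ d" shows "madd M N \<in> SZ d"
proof (rule SZ_intro)
  show "is_mat d (madd M N)" using assms by (simp add: SZ_def)
  show "madd M N (wd d I) (wd d J) \<in> \<int>" for I J using assms by (auto simp: SZ_def madd_def)
  show "madd M N (wd d (\<sigma> ` I)) (wd d (\<sigma> ` J)) = madd M N (wd d I) (wd d J)"
    if "\<sigma> permutes {..<d}" "I \<subseteq> {..<d}" "J \<subseteq> {..<d}" for \<sigma> I J
    using SZ_inv[OF assms(1) that] SZ_inv[OF assms(2) that] by (simp add: madd_def)
qed

lemma SZ_neg: assumes "M \<in> SZ d" shows "mneg M \<in> SZ d"
proof (rule SZ_intro)
  show "is_mat d (mneg M)" using assms by (simp add: SZ_def)
  show "mneg M (wd d I) (wd d J) \<in> \<int>" for I J using assms by (auto simp: SZ_def mneg_def)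
  show "mneg M (wd d (\<sigma> ` I)) (wd d (\<sigma> ` J)) = mneg M (wd d I) (wd d J)"
    if "\<sigma> permutes {..<d}" "I \<subseteq> {..<d}" "J \<subseteq> {..<d}" for \<sigma> I J
    using SZ_inv[OF assms(1) that] by (simp add: mneg_def)
qed

lemma SZ_zero: "(\<lambda>i j. 0) \<in> SZ d"
  by (rule SZ_intro) auto

lemma sub_iff_card: "finite I \<Longrightarrow> I \<subseteq> J \<longleftrightarrow> card (I - J) = 0"
  by auto

lemma SZ_one: "mone d \<in> SZ d"
proof (rule SZ_intro_cnt[where f = "\<lambda>(p,q,r). if q = 0 \<and> r = 0 then 1 else 0"])
  fix I J assume I: "I \<subseteq> {..<d}" and J: "J \<subseteq> {..<d}"
  have fI: "finite I" "finite J" using I J finite_sub_lessThan by auto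
  have "I = J \<longleftrightarrow> card (I - J) = 0 \<and> card (J - I) = 0" using fI by auto
  thus "mone d (wd d I) (wd d J) = of_int ((\<lambda>(p,q,r). if q = 0 \<and> r = 0 then 1 else 0) (cnt I J))"
    using I J by (auto simp: mone_def cnt_def wd_inj)
qed simp

lemma SZ_divE: "divpow d (Eop d) m \<in> SZ d"
proof (rule SZ_intro_cnt[where f = "\<lambda>(p,q,r). if q = 0 \<and> r = m then 1 else 0"])
  fix I J assume I: "I \<subseteq> {..<d}" and J: "J \<subseteq> {..<d}"
  have fI: "finite I" using I finite_sub_lessThan by auto
  show "divpow d (Eop d) m (wd d I) (wd d J) = of_int ((\<lambda>(p,q,r). if q = 0 \<and> r = m then 1 else 0) (cnt I J))"
    using divpow_E_wd[OF I J] sub_iff_card[OF fI, of J] by (simp add: gg_def cnt_def)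
qed simp

lemma SZ_divF: "divpow d (Fop d) m \<in> SZ d"
proof (rule SZ_intro_cnt[where f = "\<lambda>(p,q,r). if r = 0 \<and> q = m then 1 else 0"])
  fix I J assume I: "I \<subseteq> {..<d}" and J: "J \<subseteq> {..<d}"
  have fJ: "finite J" using J finite_sub_lessThan by auto
  show "divpow d (Fop d) m (wd d I) (wd d J) = of_int ((\<lambda>(p,q,r). if r = 0 \<and> q = m then 1 else 0) (cnt I J))"
    using divpow_F_wd[OF I J] sub_iff_card[OF fJ, of I] by (simp add: gg_def cnt_def)
qed simp

lemma R_sub_SZ: "M \<in> R d \<Longrightarrow> M \<in> SZ d"
  by (induct M rule: divpow_ring.induct)
     (auto intro: SZ_divE SZ_divF SZ_one SZ_zero SZ_add SZ_neg SZ_mul)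

lemma SZ_sub_R:
  assumes B1R: "\<And>t. t \<in> triples d \<Longrightarrow> B1 d t \<in> R d" and M: "M \<in> SZ d"
  shows "M \<in> R d"
proof -
  have finT: "finite (triples d)"
  proof -
    have "triples d \<subseteq> {..d} \<times> {..d} \<times> {..d}" by (auto simp: triples_def)
    thus ?thesis by (rule finite_subset) simp
  qed
  obtain c where "M = (\<lambda>i j. \<Sum>t\<in>triples d. of_int (c t) * B1 d t i j)"
    using basis1[of d] M unfolding is_Z_basis_def by blast
  also have "\<dots> = (\<lambda>i j. \<Sum>t\<in>triples d. msmult (of_int (c t)) (B1 d t) i j)" by (simp add: msmult_def)
  also have "\<dots> \<in> R d" by (rule msum_R[OF finT]) (rule msmult_int_R[OF B1R])
  finally show ?thesis .
qed


lemma kost_arith: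
  fixes p q r d b :: nat
  assumes le: "p + q + r \<le> d"
  shows "(if r \<le> b \<and> q \<le> b \<and> b - r = b - q then of_nat ((d - (p+q+r)) choose (b - r)) * 1 else (0::rat)) =
   (\<Sum>u\<le>b. if q \<le> u \<and> r \<le> u \<and> u - q = u - r
      then of_nat (p choose (u - q)) * ((of_int (int d - 2 * int (p - (u - q)) - 2 * int u) :: rat) gchoose (b - u))
      else 0)"
proof (cases "q = r")
  case False
  have "r \<le> b \<and> q \<le> b \<and> b - r = b - q \<Longrightarrow> False" using False by auto
  moreover have "\<And>u. \<not> (q \<le> u \<and> r \<le> u \<and> u - q = u - r)" using False by auto
  ultimately show ?thesis by (simp only: if_False sum.neutral_const) (metis (no_types, lifting))
next
  case True
  show ?thesis
  proof (cases "q \<le> b")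
    case False
    have "\<And>u. u \<le> b \<Longrightarrow> \<not> (q \<le> u)" using False by auto
    thus ?thesis using False True by auto
  next
    case qb: True
    define n where "n = b - q"
    define Y where "Y = (of_int (int d - 2 * int p - 2 * int q) :: rat)"
    define f where "f u = of_nat (p choose (u - q)) * ((of_int (int d - 2 * int (p - (u - q)) - 2 * int u) :: rat) gchoose (b - u))" for u
    have "(\<Sum>u\<le>b. if q \<le> u \<and> r \<le> u \<and> u - q = u - r
      then of_nat (p choose (u - q)) * ((of_int (int d - 2 * int (p - (u - q)) - 2 * int u) :: rat) gchoose (b - u))
      else 0) = (\<Sum>u\<le>b. if q \<le> u then f u else 0)"
      using True by (intro sum.cong) (auto simp: f_def)
    also have "\<dots> = (\<Sum>u\<in>{u\<in>{..b}. q \<le> u}. f u)" by (rule sum.inter_filter[symmetric]) simp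
    also have "{u\<in>{..b}. q \<le> u} = {0 + q..n + q}" using qb by (auto simp: n_def)
    also have "(\<Sum>u\<in>{0 + q..n + q}. f u) = (\<Sum>t\<in>{0..n}. f (t + q))" by (rule sum.shift_bounds_cl_nat_ivl)
    also have "\<dots> = (\<Sum>t\<in>{0..n}. (of_nat p gchoose t) * (Y gchoose (n - t)))"
    proof (rule sum.cong[OF refl])
      fix t assume t: "t \<in> {0..n}"
      show "f (t + q) = (of_nat p gchoose t) * (Y gchoose (n - t))"
      proof (cases "t \<le> p")
        case True
        have "int d - 2 * int (p - t) - 2 * int (t + q) = int d - 2 * int p - 2 * int q" using True by simp
        hence e1: "(of_int (int d - 2 * int (p - t) - 2 * int (t + q)) :: rat) = Y" by (simp only: Y_def)
        have e2: "b - (t + q) = n - t" by (simp add: n_def)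
        have e3: "t + q - q = t" by simp
        have "f (t + q) = of_nat (p choose (t + q - q)) * ((of_int (int d - 2 * int (p - (t + q - q)) - 2 * int (t + q)) :: rat) gchoose (b - (t + q)))"
          by (simp only: f_def)
        also have "\<dots> = of_nat (p choose t) * (Y gchoose (n - t))" by (simp only: e1 e2 e3)
        finally show ?thesis by (simp add: binomial_gbinomial)
      next
        case False
        thus ?thesis by (simp add: f_def binomial_gbinomial[symmetric] binomial_eq_0)
      qed
    qed
    also have "\<dots> = (of_nat p + Y) gchoose n" by (rule gbinomial_Vandermonde)
    also have "of_nat p + Y = of_nat (d - (p + q + r))" using le True by (simp add: Y_def of_nat_diff)
    finally have X: "(\<Sum>u\<le>b. if q \<le> u \<and> r \<le> u \<and> u - q = u - r
      then of_nat (p choose (u - q)) * ((of_int (int d - 2 * int (p - (u - q)) - 2 * int u) :: rat) gchoose (b - u))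
      else 0) = of_nat (d - (p + q + r)) gchoose n" .
    have "b - r = n" using True by (simp add: n_def)
    thus ?thesis using X qb True by (simp add: binomial_gbinomial)
  qed
qed

lemma inv_id:
  fixes n m N :: nat
  assumes nN: "n \<le> N"
  shows "(\<Sum>j\<le>N. (-1::rat)^j * of_nat (j choose m) * of_nat (n choose j)) = (if n = m then (-1)^m else 0)"
proof -
  let ?f = "\<lambda>j. (-1::rat)^j * of_nat (j choose m) * of_nat (n choose j)"
  have "(\<Sum>j\<le>N. ?f j) = (\<Sum>j\<le>n. ?f j)"
    by (rule sum.mono_neutral_right) (use nN in auto)
  also have "\<dots> = (if n = m then (-1)^m else 0)"
  proof (cases "m \<le> n")
    case False
    thus ?thesis by (intro trans[OF sum.neutral]) auto
  next
    case True
    have "(\<Sum>j\<le>n. ?f j) = (\<Sum>j\<in>{m..n}. ?f j)"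
      by (rule sum.mono_neutral_right) auto
    also have "\<dots> = (\<Sum>j\<in>{m..n}. (-1)^j * of_nat (n choose m) * of_nat ((n - m) choose (j - m)))"
    proof (rule sum.cong[OF refl])
      fix j assume "j \<in> {m..n}"
      hence "m \<le> j" "j \<le> n" by auto
      hence "(n choose j) * (j choose m) = (n choose m) * ((n - m) choose (j - m))" by (rule choose_mult)
      hence "of_nat (j choose m) * of_nat (n choose j) = (of_nat (n choose m) * of_nat ((n - m) choose (j - m)) :: rat)"
        by (metis (mono_tags) mult.commute of_nat_mult)
      thus "?f j = (-1)^j * of_nat (n choose m) * of_nat ((n - m) choose (j - m))" by (simp add: mult.assoc)
    qed
    also have "\<dots> = (\<Sum>i\<in>{0..n-m}. (-1)^(i+m) * of_nat (n choose m) * of_nat ((n - m) choose i))"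
    proof -
      have "{m..n} = {0 + m..(n - m) + m}" using True by simp
      thus ?thesis by (simp only: sum.shift_bounds_cl_nat_ivl) simp
    qed
    also have "\<dots> = (-1)^m * of_nat (n choose m) * (\<Sum>i\<le>n-m. (-1)^i * of_nat ((n - m) choose i))"
      by (simp add: sum_distrib_left power_add atLeast0AtMost algebra_simps)
    also have "\<dots> = (if n = m then (-1)^m else 0)"
    proof (cases "n = m")
      case True thus ?thesis by simp
    next
      case False
      hence "n - m > 0" using \<open>m \<le> n\<close> by simp
      thus ?thesis using False by (simp add: choose_alternating_sum)
    qed
    finally show ?thesis .
  qed
  finally show ?thesis .
qed

lemma ind_arith:
  fixes x x0 d :: nat
  assumes "x \<le> d"
  shows "(if x = x0 then 1 else 0 :: rat) =
    (\<Sum>j\<le>2*d. of_nat (j choose (2*x0)) * ((of_int (int d - 2 * int x + (int j - 1 - int d)) :: rat) gchoose j))"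
proof -
  have g: "(of_int (int d - 2 * int x + (int j - 1 - int d)) :: rat) gchoose j = (-1)^j * of_nat ((2*x) choose j)" for j
  proof -
    define Z :: rat where "Z = of_nat j - of_nat (2*x) - 1"
    have H: "(of_nat (2*x) :: rat) gchoose j = (-1)^j * (Z gchoose j)"
      unfolding Z_def by (rule gbinomial_negated_upper)
    have s: "(-1::rat)^j * (-1)^j = 1" by (simp flip: power_mult_distrib)
    have "Z gchoose j = ((-1)^j * (-1)^j) * (Z gchoose j)" by (simp only: s mult_1)
    also have "\<dots> = (-1)^j * ((-1)^j * (Z gchoose j))" by (simp only: mult.assoc)
    also have "\<dots> = (-1)^j * ((of_nat (2*x) :: rat) gchoose j)" by (simp only: H)
    finally have "Z gchoose j = (-1)^j * ((of_nat (2*x) :: rat) gchoose j)" .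
    moreover have "(of_int (int d - 2 * int x + (int j - 1 - int d)) :: rat) = Z" by (simp add: Z_def)
    ultimately show ?thesis by (simp add: binomial_gbinomial)
  qed
  have "(\<Sum>j\<le>2*d. of_nat (j choose (2*x0)) * ((of_int (int d - 2 * int x + (int j - 1 - int d)) :: rat) gchoose j))
      = (\<Sum>j\<le>2*d. (-1::rat)^j * of_nat (j choose (2*x0)) * of_nat ((2*x) choose j))"
    by (rule sum.cong[OF refl], simp only: g) (simp add: mult_ac)
  also have "\<dots> = (if 2*x = 2*x0 then (-1)^(2*x0) else 0)" by (rule inv_id) (use assms in simp)
  finally show ?thesis by simp
qed


definition hh :: "nat \<Rightarrow> nat \<Rightarrow> nat \<Rightarrow> nat \<Rightarrow> rat" where
  "hh d b u = (\<lambda>x. (of_int (int d - 2 * int x - 2 * int u) :: rat) gchoose (b - u))"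

definition TT :: "nat \<Rightarrow> nat \<Rightarrow> nat \<Rightarrow> mat" where
  "TT d b u = mmul d (divpow d (Fop d) u) (mmul d (Dg d (hh d b u)) (divpow d (Eop d) u))"

lemma is_mat_TT[simp]: "is_mat d (TT d b u)" by (simp add: TT_def)

lemma is_mat_sum: "(\<And>u. u \<in> S \<Longrightarrow> is_mat d (X u)) \<Longrightarrow> is_mat d (\<lambda>i j. \<Sum>u\<in>S. X u i j)"
  by (auto simp: is_mat_def)

lemma card_compl_Un:
  assumes I: "I \<subseteq> {..<d}" and J: "J \<subseteq> {..<(d::nat)}"
  shows "card ({..<d} - (I \<union> J)) = d - (card (I \<inter> J) + card (I - J) + card (J - I))"
  using I J finite_sub_lessThan[OF I] finite_sub_lessThan[OF J] by (simp add: card_Diff_subset card_Un3)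

lemma kost_entry:
  assumes I: "I \<subseteq> {..<d}" and J: "J \<subseteq> {..<(d::nat)}"
  shows "mmul d (divpow d (Eop d) b) (divpow d (Fop d) b) (wd d I) (wd d J) = (\<Sum>u\<le>b. TT d b u (wd d I) (wd d J))"
proof -
  have I': "{..<d} - I \<subseteq> {..<d}" and J': "{..<d} - J \<subseteq> {..<d}" by auto
  have e1: "({..<d} - I) - ({..<d} - J) = J - I" using I J by blast
  have e2: "({..<d} - J) - ({..<d} - I) = I - J" using I J by blast
  have e3: "({..<d} - I) \<inter> ({..<d} - J) = {..<d} - (I \<union> J)" by blast
  have le: "card (I \<inter> J) + card (I - J) + card (J - I) \<le> d"
    using cnt_triples[OF I J] by (simp add: cnt_def triples_def)
  have "mmul d (divpow d (Eop d) b) (divpow d (Fop d) b) (wd d I) (wd d J)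
     = (\<Sum>M\<in>Pow {..<d}. gg b I M * ((\<lambda>_. 1::rat) (card M) * gg b J M))"
    unfolding mmul_wd by (rule sum.cong[OF refl]) (use I J in \<open>auto simp: divpow_E_wd divpow_F_wd\<close>)
  also have "\<dots> = (\<Sum>M\<in>Pow {..<d}. gg b M ({..<d} - I) * ((\<lambda>_. 1::rat) (d - card M) * gg b M ({..<d} - J)))"
    by (rule sum_compl[OF I J])
  also have "\<dots> = (if card (J - I) \<le> b \<and> card (I - J) \<le> b \<and> b - card (J - I) = b - card (I - J)
     then of_nat (card ({..<d} - (I \<union> J)) choose (b - card (J - I))) * 1 else 0)"
    using G_lemma[OF I' J', of b "\<lambda>_. 1" b] unfolding e1 e2 e3 by simp
  also have "\<dots> = (\<Sum>u\<le>b. if card (I - J) \<le> u \<and> card (J - I) \<le> u \<and> u - card (I - J) = u - card (J - I)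
      then of_nat (card (I \<inter> J) choose (u - card (I - J))) *
        ((of_int (int d - 2 * int (card (I \<inter> J) - (u - card (I - J))) - 2 * int u) :: rat) gchoose (b - u))
      else 0)"
    unfolding card_compl_Un[OF I J] by (rule kost_arith[OF le])
  also have "\<dots> = (\<Sum>u\<le>b. TT d b u (wd d I) (wd d J))"
  proof (rule sum.cong[OF refl])
    fix u assume "u \<in> {..b}"
    show "(if card (I - J) \<le> u \<and> card (J - I) \<le> u \<and> u - card (I - J) = u - card (J - I)
      then of_nat (card (I \<inter> J) choose (u - card (I - J))) *
        ((of_int (int d - 2 * int (card (I \<inter> J) - (u - card (I - J))) - 2 * int u) :: rat) gchoose (b - u))
      else 0) = TT d b u (wd d I) (wd d J)"
      unfolding TT_def FDE_wd[OF I J] G_lemma[OF I J, of u "hh d b u" u] by (simp add: hh_def)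
  qed
  finally show ?thesis .
qed

lemma TT0: "TT d b 0 = Dg d (hh d b 0)"
proof (rule mat_eqI[of d])
  fix I J assume I: "I \<subseteq> {..<d}" and J: "J \<subseteq> {..<d}"
  have fI: "finite I" "finite J" using I J finite_sub_lessThan by auto
  have "I = J \<longleftrightarrow> card (I - J) = 0 \<and> card (J - I) = 0" using fI by auto
  thus "TT d b 0 (wd d I) (wd d J) = Dg d (hh d b 0) (wd d I) (wd d J)"
    by (auto simp: TT_def FDE_wd[OF I J] G_lemma[OF I J] Dg_wd[OF I J])
qed auto

lemma kost_mat:
  "Dg d (hh d b 0) = madd (mmul d (divpow d (Eop d) b) (divpow d (Fop d) b))
      (mneg (\<lambda>i j. \<Sum>u\<in>{1..b}. TT d b u i j))"
proof (rule mat_eqI[of d])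
  show "is_mat d (madd (mmul d (divpow d (Eop d) b) (divpow d (Fop d) b)) (mneg (\<lambda>i j. \<Sum>u\<in>{1..b}. TT d b u i j)))"
    by (intro is_mat_madd is_mat_mneg is_mat_sum is_mat_mmul is_mat_divpow) auto
  fix I J assume I: "I \<subseteq> {..<d}" and J: "J \<subseteq> {..<d}"
  have s: "{..b} = insert 0 {1..b}" by auto
  have "(\<Sum>u\<le>b. TT d b u (wd d I) (wd d J)) = TT d b 0 (wd d I) (wd d J) + (\<Sum>u\<in>{1..b}. TT d b u (wd d I) (wd d J))"
    unfolding s by (subst sum.insert) auto
  thus "Dg d (hh d b 0) (wd d I) (wd d J) = madd (mmul d (divpow d (Eop d) b) (divpow d (Fop d) b))
      (mneg (\<lambda>i j. \<Sum>u\<in>{1..b}. TT d b u i j)) (wd d I) (wd d J)"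
    using kost_entry[OF I J, of b] by (simp add: madd_def mneg_def TT0)
qed simp

definition DG :: "nat \<Rightarrow> int \<Rightarrow> nat \<Rightarrow> mat" where
  "DG d s j = Dg d (\<lambda>x. (of_int (int d - 2 * int x + s) :: rat) gchoose j)"

lemma Dg_sum: "Dg d (\<lambda>x. \<Sum>k\<in>S. f k x) = (\<lambda>i j. \<Sum>k\<in>S. Dg d (f k) i j)"
proof (intro ext)
  fix i j
  show "Dg d (\<lambda>x. \<Sum>k\<in>S. f k x) i j = (\<Sum>k\<in>S. Dg d (f k) i j)"
  proof (cases "i \<in> Idx d \<and> i = j")
    case True
    have "\<And>g. Dg d g i j = g (card (st i))" by (simp only: Dg_def if_P[OF True])
    thus ?thesis by simp
  next
    case False
    have "\<And>g. Dg d g i j = 0" by (simp only: Dg_def if_not_P[OF False])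
    thus ?thesis by simp
  qed
qed

lemma Dg_cong: assumes fg: "\<And>x. x \<le> d \<Longrightarrow> f x = g x" shows "Dg d f = Dg d g"
proof (intro ext)
  fix i j
  show "Dg d f i j = Dg d g i j"
  proof (cases "i \<in> Idx d \<and> i = j")
    case True
    have "card (st i) \<le> card {..<d}" using Idx_st_sub True by (intro card_mono) auto
    hence "f (card (st i)) = g (card (st i))" using fg by simp
    thus ?thesis by (simp only: Dg_def if_P[OF True])
  next
    case False
    thus ?thesis by (simp only: Dg_def if_not_P[OF False] if_False)
  qed
qed

lemma gchoose_Ints: "(of_int s :: rat) gchoose n \<in> \<int>"
proof (cases "0 \<le> s")
  case True
  hence e: "(of_int s :: rat) = of_nat (nat s)" by simp
  have "(of_int s :: rat) gchoose n = of_nat (nat s choose n)" by (simp only: e binomial_gbinomial)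
  thus ?thesis by (simp only: Ints_of_nat)
next
  case False
  have H: "(of_int s :: rat) gchoose n = (-1)^n * ((of_nat n - of_int s - 1) gchoose n)"
    by (rule gbinomial_negated_upper)
  have "int (n + nat (- s) - 1) = int n - s - 1" using False by simp
  hence "(of_int (int (n + nat (- s) - 1)) :: rat) = of_int (int n - s - 1)" by (simp only:)
  hence e: "(of_nat n - of_int s - 1 :: rat) = of_nat (n + nat (- s) - 1)" by simp
  have "(of_int s :: rat) gchoose n = (-1)^n * of_nat ((n + nat (- s) - 1) choose n)"
    by (simp only: H e binomial_gbinomial)
  moreover have "(-1::rat)^n \<in> \<int>" by simp
  ultimately show ?thesis by (simp only: Ints_mult Ints_of_nat)
qed

lemma msmult_Ints_R: assumes "c \<in> \<int>" "M \<in> R d" shows "msmult c M \<in> R d"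
proof -
  obtain z where "c = of_int z" using assms(1) by (rule Ints_cases)
  thus ?thesis using msmult_int_R[OF assms(2)] by simp
qed

lemma DG_R: "DG d s j \<in> R d"
proof (induct j arbitrary: s rule: less_induct)
  case (less b)
  have hhu: "Dg d (hh d b u) = DG d (- 2 * int u) (b - u)" for u
    by (simp add: hh_def DG_def)
  have step1: "DG d 0 b \<in> R d"
  proof -
    have "DG d 0 b = Dg d (hh d b 0)" by (simp add: hh_def DG_def)
    also have "\<dots> \<in> R d"
      unfolding kost_mat
    proof (intro divpow_ring.add divpow_ring.neg divpow_ring.mul divpow_ring.gen_e divpow_ring.gen_f msum_R)
      show "finite {1..b}" by simp
      fix u assume u: "u \<in> {1..b}"
      have "Dg d (hh d b u) \<in> R d" unfolding hhu using u by (intro less) auto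
      thus "TT d b u \<in> R d" unfolding TT_def
        by (intro divpow_ring.mul divpow_ring.gen_e divpow_ring.gen_f)
    qed
    finally show ?thesis .
  qed
  have "DG d s b = Dg d (\<lambda>x. \<Sum>k\<in>{0..b}. ((of_int s :: rat) gchoose (b - k)) * ((of_int (int d - 2 * int x + 0) :: rat) gchoose k))"
  proof -
    have "(of_int (int d - 2 * int x + s) :: rat) gchoose b =
      (\<Sum>k\<in>{0..b}. ((of_int s :: rat) gchoose (b - k)) * ((of_int (int d - 2 * int x + 0) :: rat) gchoose k))" for x
    proof -
      have "(of_int (int d - 2 * int x + s) :: rat) = of_int (int d - 2 * int x) + of_int s" by simp
      hence "(of_int (int d - 2 * int x + s) :: rat) gchoose b =
          (\<Sum>k\<in>{0..b}. ((of_int (int d - 2 * int x) :: rat) gchoose k) * ((of_int s :: rat) gchoose (b - k)))"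
        using gbinomial_Vandermonde[of "of_int (int d - 2 * int x) :: rat" "of_int s" b] by simp
      thus ?thesis by (simp add: mult.commute)
    qed
    thus ?thesis by (simp add: DG_def)
  qed
  also have "\<dots> = (\<lambda>i j. \<Sum>k\<in>{0..b}. msmult (((of_int s :: rat) gchoose (b - k))) (DG d 0 k) i j)"
    by (simp add: Dg_sum DG_def msmult_Dg)
  also have "\<dots> \<in> R d"
  proof (rule msum_R)
    fix k assume k: "k \<in> {0..b}"
    have "DG d 0 k \<in> R d"
    proof (cases "k = b")
      case True thus ?thesis using step1 by simp
    next
      case False thus ?thesis using k by (intro less) auto
    qed
    thus "msmult (((of_int s :: rat) gchoose (b - k))) (DG d 0 k) \<in> R d" by (rule msmult_Ints_R[OF gchoose_Ints])
  qed simp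
  finally show ?case .
qed

lemma ind_R: "Dg d (\<lambda>x. if x = x0 then 1 else 0) \<in> R d"
proof -
  have "Dg d (\<lambda>x. if x = x0 then 1 else 0) =
    Dg d (\<lambda>x. \<Sum>j\<le>2*d. of_nat (j choose (2*x0)) * ((of_int (int d - 2 * int x + (int j - 1 - int d)) :: rat) gchoose j))"
    by (rule Dg_cong) (rule ind_arith)
  also have "\<dots> = (\<lambda>i k. \<Sum>j\<le>2*d. msmult (of_nat (j choose (2*x0))) (DG d (int j - 1 - int d) j) i k)"
    by (simp add: Dg_sum DG_def msmult_Dg)
  also have "\<dots> \<in> R d"
    by (rule msum_R) (auto intro: msmult_nat_R DG_R)
  finally show ?thesis .
qed

lemma binom_R: "Dg d (\<lambda>x. of_nat (x choose b)) \<in> R d"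
proof -
  have "Dg d (\<lambda>x. of_nat (x choose b)) = Dg d (\<lambda>x. \<Sum>x0\<le>d. of_nat (x0 choose b) * (if x = x0 then 1 else 0))"
  proof (rule Dg_cong)
    fix x assume x: "x \<le> d"
    have "(\<Sum>x0\<le>d. of_nat (x0 choose b) * (if x = x0 then 1 else 0)) = (\<Sum>x0\<le>d. if x = x0 then (of_nat (x0 choose b) :: rat) else 0)"
      by (rule sum.cong) auto
    also have "\<dots> = of_nat (x choose b)" using x by (simp add: sum.delta)
    finally show "of_nat (x choose b) = (\<Sum>x0\<le>d. of_nat (x0 choose b) * (if x = x0 then 1 else (0::rat)))" by simp
  qed
  also have "\<dots> = (\<lambda>i k. \<Sum>x0\<le>d. msmult (of_nat (x0 choose b)) (Dg d (\<lambda>x. if x = x0 then 1 else 0)) i k)"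
    by (simp add: Dg_sum msmult_Dg)
  also have "\<dots> \<in> R d"
    by (rule msum_R) (auto intro: msmult_nat_R ind_R)
  finally show ?thesis .
qed

lemma B1_R: "B1 d t \<in> R d"
proof -
  obtain a b c where t: "t = (a,b,c)" by (cases t) auto
  show ?thesis unfolding t B1_def mbinom_H2
    by (simp add: divpow_ring.mul divpow_ring.gen_e divpow_ring.gen_f binom_R)
qed

theorem theorem2p4:
  fixes d :: nat
  shows "SZ d = divpow_ring d
    \<and> is_Z_basis (SZ d) (triples d)
           (\<lambda>(a,b,c). mmul d (divpow d (Fop d) a) (mmul d (mbinom d (H2op d) b) (divpow d (Eop d) c)))
    \<and> is_Z_basis (SZ d) (triples d)
           (\<lambda>(a,b,c). mmul d (divpow d (Eop d) a) (mmul d (mbinom d (H1op d) b) (divpow d (Fop d) c)))"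
proof (intro conjI)
  show "SZ d = divpow_ring d"
    using SZ_sub_R[OF B1_R] R_sub_SZ by blast
  show "is_Z_basis (SZ d) (triples d)
           (\<lambda>(a,b,c). mmul d (divpow d (Fop d) a) (mmul d (mbinom d (H2op d) b) (divpow d (Eop d) c)))"
    using basis1[of d] unfolding B1_def .
  show "is_Z_basis (SZ d) (triples d)
           (\<lambda>(a,b,c). mmul d (divpow d (Eop d) a) (mmul d (mbinom d (H1op d) b) (divpow d (Fop d) c)))"
    using basis2[of d] unfolding B2_def .
qed


end
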